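(* Let $\mathfrak{b}\subset\mathfrak{g}=\mathfrak{gl}(n+1,\mathbb{C})$ be a Borel subalgebra with nilradical $\mathfrak{n}$, and suppose that the $K_{n+1}$-orbit of $\mathfrak{b}$ in $\mathcal{B}_{n+1}$ is not closed. Then $\pi_{\mathfrak{k}_{n+1}}(\mathfrak{n}^{reg})\cap\mathcal{N}_{\mathfrak{k}_{n+1}}=\emptyset$; that is, for no element $y\in\mathfrak{n}$ which is regular in $\mathfrak{g}$ is $\pi_{\mathfrak{k}_{n+1}}(y)$ nilpotent.
   Context: $n\ge1$. $\theta$ is the involution of $\mathfrak{g}$ given by conjugation by $\mathrm{diag}(1,\dots,1,-1)$; $\mathfrak{g}=\mathfrak{k}_{n+1}\oplus\mathfrak{p}_{n+1}$ is the decomposition into the $+1$ and $-1$ eigenspaces of $\theta$, so $\mathfrak{k}_{n+1}=\mathfrak{gl}(n,\mathbb{C})\oplus\mathfrak{gl}(1,\mathbb{C})$ is the block diagonal matrices with blocks of sizes $n$ and $1$. $\pi_{\mathfrak{k}_{n+1}}:\mathfrak{g}\to\mathfrak{k}_{n+1}$ is the projection along $\mathfrak{p}_{n+1}$, and $\mathcal{N}_{\mathfrak{k}_{n+1}}$ is the set of nilpotent elements of $\mathfrak{k}_{n+1}$. $K_{n+1}=GL(n,\mathbb{C})\times GL(1,\mathbb{C})$ is the corresponding group of invertible block diagonal matrices, acting by conjugation on the flag variety $\mathcal{B}_{n+1}$ of $\mathfrak{g}$. $\mathfrak{n}^{reg}$ denotes the set of elements of $\mathfrak{n}$ that are regular in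 $\mathfrak{g}$ (the regular nilpotent elements of $\mathfrak{b}$). *)

theory Defs
  imports Complex_Main "Jordan_Normal_Form.Matrix"
begin

text \<open>Matrices in gl(N,C) are N x N complex matrices (N = n+1).
  Indices run over 0..N-1; the last index n carries the GL(1) block.\<close>

definition inv_pair :: "nat \<Rightarrow> complex mat \<Rightarrow> complex mat \<Rightarrow> bool" where
  "inv_pair N g h \<longleftrightarrow> g \<in> carrier_mat N N \<and> h \<in> carrier_mat N N \<and>
     g * h = 1\<^sub>m N \<and> h * g = 1\<^sub>m N"

text \<open>conjugation x |-> g x g^{-1}, with h = g^{-1}\<close>
definition conj_set :: "complex mat \<Rightarrow> complex mat \<Rightarrow> complex mat set \<Rightarrow> complex mat set" where
  "conj_set g h S = (\<lambda>A. g * A * h) ` S"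

text \<open>standard Borel subalgebra (upper triangular) and its nilradical (strictly upper)\<close>
definition upper_tri :: "nat \<Rightarrow> complex mat set" where
  "upper_tri N = {A \<in> carrier_mat N N. \<forall>i<N. \<forall>j<N. j < i \<longrightarrow> A $$ (i,j) = 0}"

definition strict_upper_tri :: "nat \<Rightarrow> complex mat set" where
  "strict_upper_tri N = {A \<in> carrier_mat N N. \<forall>i<N. \<forall>j<N. j \<le> i \<longrightarrow> A $$ (i,j) = 0}"

text \<open>Flag variety: the set of Borel subalgebras, i.e. the G-conjugates of upper_tri\<close>
definition flag_variety :: "nat \<Rightarrow> complex mat set set" where
  "flag_variety N = {conj_set g h (upper_tri N) | g h. inv_pair N g h}"

text \<open>K_{n+1} = GL(n) x GL(1): invertible block diagonal matrices of size n+1\<close>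
definition block_diag :: "nat \<Rightarrow> complex mat \<Rightarrow> bool" where
  "block_diag n k \<longleftrightarrow> (\<forall>i\<le>n. \<forall>j\<le>n. (i < n) \<noteq> (j < n) \<longrightarrow> k $$ (i,j) = 0)"

definition K_orbit :: "nat \<Rightarrow> complex mat set \<Rightarrow> complex mat set set" where
  "K_orbit n b = {conj_set k k' b | k k'. inv_pair (n+1) k k' \<and> block_diag n k \<and> block_diag n k'}"

text \<open>Topology on the flag variety G/B: the quotient topology of the (analytic) topology of
  GL(N,C) under g |-> g b_0 g^{-1}.  A set of Borels is closed iff its preimage in GL(N,C)
  is closed in GL(N,C) (sequentially, w.r.t. entrywise convergence).  For K-orbits,
  analytic closedness coincides with Zariski closedness.\<close>
definition mat_converges :: "nat \<Rightarrow> (nat \<Rightarrow> complex mat) \<Rightarrow> complex mat \<Rightarrow> bool" where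
  "mat_converges N s g \<longleftrightarrow> (\<forall>i<N. \<forall>j<N. (\<lambda>k. s k $$ (i,j)) \<longlonglongrightarrow> g $$ (i,j))"

definition flag_closed :: "nat \<Rightarrow> complex mat set set \<Rightarrow> bool" where
  "flag_closed N Orb \<longleftrightarrow>
     (\<forall>s s' g h. (\<forall>k. inv_pair N (s k) (s' k) \<and> conj_set (s k) (s' k) (upper_tri N) \<in> Orb)
        \<and> inv_pair N g h \<and> mat_converges N s g
        \<longrightarrow> conj_set g h (upper_tri N) \<in> Orb)"

definition nilpotent_mat :: "nat \<Rightarrow> complex mat \<Rightarrow> bool" where
  "nilpotent_mat N x \<longleftrightarrow> (\<exists>k. x ^\<^sub>m k = 0\<^sub>m N N)"

text \<open>regular elements: the centralizer has dimension N (the minimum possible)\<close>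
definition centralizer :: "nat \<Rightarrow> complex mat \<Rightarrow> complex mat set" where
  "centralizer N x = {z \<in> carrier_mat N N. z * x = x * z}"

definition mat_lin_indep :: "nat \<Rightarrow> complex mat set \<Rightarrow> bool" where
  "mat_lin_indep N S \<longleftrightarrow> (\<forall>c :: complex mat \<Rightarrow> complex.
      (\<forall>i<N. \<forall>j<N. (\<Sum>A\<in>S. c A * A $$ (i,j)) = 0) \<longrightarrow> (\<forall>A\<in>S. c A = 0))"

definition subspace_dim :: "nat \<Rightarrow> complex mat set \<Rightarrow> nat" where
  "subspace_dim N V = (GREATEST d. \<exists>S. finite S \<and> S \<subseteq> V \<and> mat_lin_indep N S \<and> card S = d)"

definition regular_mat :: "nat \<Rightarrow> complex mat \<Rightarrow> bool" where
  "regular_mat N x \<longleftrightarrow> x \<in> carrier_mat N N \<and> subspace_dim N (centralizer N x) = N"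

text \<open>projection gl(n+1) -> k_{n+1} along p_{n+1}\<close>
definition proj_k :: "nat \<Rightarrow> complex mat \<Rightarrow> complex mat" where
  "proj_k n x = mat (n+1) (n+1) (\<lambda>(i,j). if (i < n) = (j < n) then x $$ (i,j) else 0)"

end

theory Submission
  imports Defs "Jordan_Normal_Form.Jordan_Normal_Form_Existence"
begin


lemma mult_sq_carrier[simp]: "A \<in> carrier_mat n n \<Longrightarrow> B \<in> carrier_mat n n \<Longrightarrow> A * B \<in> carrier_mat n n"
  by auto

lemma mult_entry:
  assumes "A \<in> carrier_mat a b" "B \<in> carrier_mat b c" "i < a" "j < c"
  shows "(A * B) $$ (i,j) = (\<Sum>l<b. A $$ (i,l) * B $$ (l,j))"
  using assms by (simp add: scalar_prod_def lessThan_atLeast0)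

lemma pow_Suc_left:
  assumes "A \<in> carrier_mat n n"
  shows "A ^\<^sub>m Suc k = A * A ^\<^sub>m k"
  using assms
proof (induct k)
  case 0 then show ?case by simp
next
  case (Suc k)
  have "A ^\<^sub>m Suc (Suc k) = (A * A ^\<^sub>m k) * A" using Suc by simp
  also have "\<dots> = A * (A ^\<^sub>m k * A)" using Suc(2) by (simp add: assoc_mult_mat[of _ n n _ n _ n])
  finally show ?case by simp
qed

lemma pow_add_mat:
  assumes "A \<in> carrier_mat n n"
  shows "A ^\<^sub>m (a + b) = A ^\<^sub>m a * A ^\<^sub>m b"
  using assms
proof (induct b)
  case 0 then show ?case by simp
next
  case (Suc b)
  have "A ^\<^sub>m (a + Suc b) = (A ^\<^sub>m a * A ^\<^sub>m b) * A" using Suc by simp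
  also have "\<dots> = A ^\<^sub>m a * (A ^\<^sub>m b * A)" using Suc(2) by (simp add: assoc_mult_mat[of _ n n _ n _ n])
  finally show ?case by simp
qed

lemma pow_conj:
  assumes "inv_pair N g h" "u \<in> carrier_mat N N"
  shows "(g * u * h) ^\<^sub>m k = g * u ^\<^sub>m k * h"
proof (induct k)
  case 0
  from assms show ?case unfolding inv_pair_def by auto
next
  case (Suc k)
  from assms have g: "g \<in> carrier_mat N N" and h: "h \<in> carrier_mat N N" and hg: "h * g = 1\<^sub>m N"
    unfolding inv_pair_def by auto
  have "(g * u * h) ^\<^sub>m Suc k = (g * u ^\<^sub>m k * h) * (g * u * h)" using Suc by simp
  also have "\<dots> = g * u ^\<^sub>m k * (h * g) * u * h"
    using g h assms(2) by (simp add: assoc_mult_mat[of _ N N _ N _ N])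
  also have "\<dots> = g * (u ^\<^sub>m k * u) * h"
    using g h assms(2) hg by (simp add: assoc_mult_mat[of _ N N _ N _ N])
  finally show ?case by simp
qed

lemma pow_zero_ge:
  assumes "A \<in> carrier_mat n n" "A ^\<^sub>m K = 0\<^sub>m n n" "K \<le> k"
  shows "A ^\<^sub>m k = 0\<^sub>m n n"
proof -
  obtain d where k: "k = K + d" using assms(3) le_Suc_ex by blast
  show ?thesis unfolding k pow_add_mat[OF assms(1)] assms(2) using assms(1) by simp
qed

lemma inv_pair_det: assumes "inv_pair N g h" shows "det g * det h = 1"
proof -
  from assms have "g \<in> carrier_mat N N" "h \<in> carrier_mat N N" "g * h = 1\<^sub>m N" unfolding inv_pair_def by auto
  then show ?thesis by (metis det_mult det_one)
qed

lemma inv_pair_sym: "inv_pair N g h \<Longrightarrow> inv_pair N h g" unfolding inv_pair_def by auto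

lemma inv_pair_mult:
  assumes "inv_pair N a a'" "inv_pair N b b'"
  shows "inv_pair N (a * b) (b' * a')"
proof -
  from assms have c: "a \<in> carrier_mat N N" "a' \<in> carrier_mat N N" "b \<in> carrier_mat N N" "b' \<in> carrier_mat N N"
    and e: "a * a' = 1\<^sub>m N" "a' * a = 1\<^sub>m N" "b * b' = 1\<^sub>m N" "b' * b = 1\<^sub>m N" unfolding inv_pair_def by auto
  have "a * b * (b' * a') = a * (b * b') * a'" using c by (simp add: assoc_mult_mat[of _ N N _ N _ N])
  also have "\<dots> = 1\<^sub>m N" using c e by simp
  finally have 1: "a * b * (b' * a') = 1\<^sub>m N" .
  have "b' * a' * (a * b) = b' * (a' * a) * b" using c by (simp add: assoc_mult_mat[of _ N N _ N _ N])
  also have "\<dots> = 1\<^sub>m N" using c e by simp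
  finally have 2: "b' * a' * (a * b) = 1\<^sub>m N" .
  show ?thesis unfolding inv_pair_def using c 1 2 by auto
qed

lemma inv_unique:
  assumes "inv_pair N g h" "x \<in> carrier_mat N N" "g * x = 1\<^sub>m N"
  shows "x = h"
proof -
  from assms have g: "g \<in> carrier_mat N N" and h: "h \<in> carrier_mat N N" and hg: "h * g = 1\<^sub>m N"
    unfolding inv_pair_def by auto
  have "h = h * (g * x)" using assms h by simp
  also have "\<dots> = (h * g) * x" using g h assms(2) by (simp add: assoc_mult_mat[of _ N N _ N _ N])
  also have "\<dots> = x" using hg assms(2) by simp
  finally show ?thesis by simp
qed

lemma det_nonzero_inv:
  assumes "A \<in> carrier_mat N N" "det A \<noteq> 0"
  shows "\<exists>B. inv_pair N A B"
proof -
  define B where "B = (1 / det A) \<cdot>\<^sub>m adj_mat A"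
  have aA: "adj_mat A \<in> carrier_mat N N" using adj_mat[OF assms(1)] by auto
  have "A * B = (1 / det A) \<cdot>\<^sub>m (A * adj_mat A)" unfolding B_def using aA assms(1) by (simp add: mult_smult_distrib)
  also have "\<dots> = 1\<^sub>m N" using adj_mat(2)[OF assms(1)] assms(2) by (auto intro!: eq_matI)
  finally have 1: "A * B = 1\<^sub>m N" .
  have "B * A = (1 / det A) \<cdot>\<^sub>m (adj_mat A * A)" unfolding B_def using aA assms(1) by (simp add: mult_smult_assoc_mat)
  also have "\<dots> = 1\<^sub>m N" using adj_mat(3)[OF assms(1)] assms(2) by (auto intro!: eq_matI)
  finally have 2: "B * A = 1\<^sub>m N" .
  show ?thesis unfolding inv_pair_def using 1 2 aA assms(1) B_def by (intro exI[of _ B], auto)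
qed


lemma sum_single:
  assumes "i < (N::nat)" "\<And>l. l < N \<Longrightarrow> l \<noteq> i \<Longrightarrow> f l = 0"
  shows "(\<Sum>l<N. f l) = (f i :: 'a :: comm_monoid_add)"
proof -
  have "(\<Sum>l<N. f l) = f i + (\<Sum>l\<in>{..<N} - {i}. f l)"
    using assms(1) by (subst sum.remove[of _ i]) auto
  also have "(\<Sum>l\<in>{..<N} - {i}. f l) = 0" using assms(2) by (intro sum.neutral) auto
  finally show ?thesis by simp
qed

lemma su_carrier: "u \<in> strict_upper_tri N \<Longrightarrow> u \<in> carrier_mat N N"
  unfolding strict_upper_tri_def by auto

lemma su_entry: "u \<in> strict_upper_tri N \<Longrightarrow> i < N \<Longrightarrow> j < N \<Longrightarrow> j \<le> i \<Longrightarrow> u $$ (i,j) = 0"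
  unfolding strict_upper_tri_def by auto

lemma su_pow:
  assumes u: "u \<in> strict_upper_tri N"
  shows "i < N \<Longrightarrow> j < N \<Longrightarrow> j < i + k \<Longrightarrow> (u ^\<^sub>m k) $$ (i,j) = 0"
proof (induct k arbitrary: j)
  case 0
  then show ?case using su_carrier[OF u] by simp
next
  case (Suc k)
  have uc: "u \<in> carrier_mat N N" using su_carrier[OF u] .
  have "(u ^\<^sub>m Suc k) $$ (i,j) = (\<Sum>l<N. (u ^\<^sub>m k) $$ (i,l) * u $$ (l,j))"
    unfolding pow_mat.simps(2) by (rule mult_entry[OF pow_carrier_mat[OF uc] uc], insert Suc, auto)
  also have "\<dots> = 0"
  proof (rule sum.neutral, intro ballI)
    fix l assume l: "l \<in> {..<N}"
    show "(u ^\<^sub>m k) $$ (i,l) * u $$ (l,j) = 0"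
    proof (cases "l < i + k")
      case True then show ?thesis using Suc l by simp
    next
      case False then have "j \<le> l" using Suc by simp
      then show ?thesis using su_entry[OF u _ Suc(3)] l by simp
    qed
  qed
  finally show ?case .
qed

lemma su_pow_diag:
  assumes u: "u \<in> strict_upper_tri N"
  shows "i + k < N \<Longrightarrow> (u ^\<^sub>m k) $$ (i,i+k) = (\<Prod>l<k. u $$ (i+l, Suc (i+l)))"
proof (induct k)
  case 0
  then show ?case using su_carrier[OF u] by simp
next
  case (Suc k)
  have uc: "u \<in> carrier_mat N N" using su_carrier[OF u] .
  have "(u ^\<^sub>m Suc k) $$ (i,i + Suc k) = (\<Sum>l<N. (u ^\<^sub>m k) $$ (i,l) * u $$ (l,i + Suc k))"
    unfolding pow_mat.simps(2) by (rule mult_entry[OF pow_carrier_mat[OF uc] uc], insert Suc, auto)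
  also have "\<dots> = (u ^\<^sub>m k) $$ (i,i+k) * u $$ (i+k,i + Suc k)"
  proof (rule sum_single)
    show "i + k < N" using Suc by simp
    fix l assume l: "l < N" "l \<noteq> i + k"
    show "(u ^\<^sub>m k) $$ (i,l) * u $$ (l,i + Suc k) = 0"
    proof (cases "l < i + k")
      case True then show ?thesis using su_pow[OF u, of i l k] Suc l by simp
    next
      case False then have "i + Suc k \<le> l" using l by simp
      then show ?thesis using su_entry[OF u l(1), of "i + Suc k"] Suc by simp
    qed
  qed
  also have "\<dots> = (\<Prod>l<Suc k. u $$ (i+l, Suc (i+l)))" using Suc by simp
  finally show ?case .
qed

lemma su_nilpotent:
  assumes u: "u \<in> strict_upper_tri N"
  shows "u ^\<^sub>m N = 0\<^sub>m N N"
  by (rule eq_matI, insert su_carrier[OF u], auto intro!: su_pow[OF u])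

lemma su_superdiag:
  assumes u: "u \<in> strict_upper_tri (Suc n)" and nz: "u ^\<^sub>m n \<noteq> 0\<^sub>m (Suc n) (Suc n)"
  shows "j < n \<Longrightarrow> u $$ (j, Suc j) \<noteq> 0"
proof
  assume j: "j < n" and z: "u $$ (j, Suc j) = 0"
  have uc: "u \<in> carrier_mat (Suc n) (Suc n)" using su_carrier[OF u] .
  have "u ^\<^sub>m n = 0\<^sub>m (Suc n) (Suc n)"
  proof (rule eq_matI)
    fix a b assume a: "a < dim_row (0\<^sub>m (Suc n) (Suc n))" and b: "b < dim_col (0\<^sub>m (Suc n) (Suc n))"
    show "(u ^\<^sub>m n) $$ (a,b) = 0\<^sub>m (Suc n) (Suc n) $$ (a,b)"
    proof (cases "b < a + n")
      case True then show ?thesis using su_pow[OF u, of a b n] a b by simp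
    next
      case False
      then have ab: "a = 0" "b = n" using a b by auto
      have "(u ^\<^sub>m n) $$ (0, 0 + n) = (\<Prod>l<n. u $$ (0+l, Suc (0+l)))"
        by (rule su_pow_diag[OF u], simp)
      also have "\<dots> = 0" using z j by (intro prod_zero) auto
      finally show ?thesis using ab by simp
    qed
  qed (insert uc, auto)
  with nz show False by simp
qed

lemma C3:
  assumes u: "u \<in> strict_upper_tri (Suc n)"
    and sd: "\<And>j. j < n \<Longrightarrow> u $$ (j, Suc j) \<noteq> 0"
    and FE: "(\<Sum>i<Suc n. F i * E i) \<noteq> (0::complex)"
    and van: "\<And>m. m \<ge> 1 \<Longrightarrow> (\<Sum>i<Suc n. F i * (\<Sum>j<Suc n. (u ^\<^sub>m m) $$ (i,j) * E j)) = 0"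
  shows "\<exists>p\<le>n. (\<forall>j<p. F j = 0) \<and> (\<forall>j. p < j \<and> j < Suc n \<longrightarrow> E j = 0)"
proof -
  let ?S = "{j. j < Suc n \<and> E j \<noteq> 0}"
  have ne: "?S \<noteq> {}"
  proof
    assume "?S = {}"
    then have "\<forall>i<Suc n. E i = 0" by auto
    then have "(\<Sum>i<Suc n. F i * E i) = 0" by simp
    with FE show False by simp
  qed
  have fin: "finite ?S" by simp
  define p where "p = Max ?S"
  have pS: "p \<in> ?S" unfolding p_def using Max_in[OF fin ne] .
  then have pn: "p \<le> n" and Ep: "E p \<noteq> 0" by auto
  have Ez: "\<And>j. p < j \<Longrightarrow> j < Suc n \<Longrightarrow> E j = 0"
  proof (rule ccontr)
    fix j assume "p < j" "j < Suc n" "E j \<noteq> 0"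
    then have "j \<in> ?S" by auto
    then have "j \<le> p" unfolding p_def using Max_ge[OF fin] by auto
    with \<open>p < j\<close> show False by simp
  qed
  define v where "v m i = (\<Sum>j<Suc n. (u ^\<^sub>m m) $$ (i,j) * E j)" for m i
  have va: "v m i = 0" if "m \<le> p" "i < Suc n" "p < i + m" for m i
    unfolding v_def
  proof (rule sum.neutral, intro ballI)
    fix j assume j: "j \<in> {..<Suc n}"
    show "(u ^\<^sub>m m) $$ (i,j) * E j = 0"
    proof (cases "j < i + m")
      case True then show ?thesis using su_pow[OF u, of i j m] that j by simp
    next
      case False then show ?thesis using Ez[of j] that j by simp
    qed
  qed
  have vb: "v m (p - m) \<noteq> 0" if "m \<le> p" for m
  proof -
    have "v m (p - m) = (u ^\<^sub>m m) $$ (p - m, p) * E p"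
      unfolding v_def
    proof (rule sum_single)
      show "p < Suc n" using pn by simp
      fix j assume j: "j < Suc n" "j \<noteq> p"
      show "(u ^\<^sub>m m) $$ (p - m, j) * E j = 0"
      proof (cases "j < p")
        case True then show ?thesis using su_pow[OF u, of "p - m" j m] that j pn by simp
      next
        case False then show ?thesis using Ez[of j] j by simp
      qed
    qed
    moreover have "(u ^\<^sub>m m) $$ (p - m, p) = (\<Prod>l<m. u $$ (p - m + l, Suc (p - m + l)))"
      using su_pow_diag[OF u, of "p - m" m] that pn by simp
    moreover have "(\<Prod>l<m. u $$ (p - m + l, Suc (p - m + l))) \<noteq> 0" using sd that pn by (subst prod_zero_iff) auto
    ultimately show ?thesis using Ep by simp
  qed
  have Fz: "\<forall>k. k < p \<longrightarrow> F k = 0"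
  proof (rule allI, induct_tac k rule: nat_less_induct, intro impI)
    fix k assume IH: "\<forall>k'<k. k' < p \<longrightarrow> F k' = 0" and kp: "k < p"
    define m where "m = p - k"
    have m1: "m \<ge> 1" "m \<le> p" and km: "k = p - m" using kp unfolding m_def by auto
    have "0 = (\<Sum>i<Suc n. F i * v m i)" using van[OF m1(1)] unfolding v_def by simp
    also have "\<dots> = F k * v m k"
    proof (rule sum_single)
      show "k < Suc n" using kp pn by simp
      fix i assume i: "i < Suc n" "i \<noteq> k"
      show "F i * v m i = 0"
      proof (cases "i < k")
        case True then show ?thesis using IH kp by simp
      next
        case False then have "p < i + m" using i unfolding m_def using kp by simp
        then show ?thesis using va[OF m1(2) i(1)] by simp
      qed
    qed
    finally show "F k = 0" using vb[OF m1(2)] km by simp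
  qed
  show ?thesis using pn Fz Ez by blast
qed


lemma seq_lemma:
  fixes a s :: "nat \<Rightarrow> complex"
  assumes a0: "a 0 = 1" and rec: "\<And>m. a (Suc m) = (\<Sum>j<m. a j * s (m - 1 - j))"
    and az: "\<And>m. m \<ge> K \<Longrightarrow> a m = 0" and sz: "\<And>k. k \<ge> K \<Longrightarrow> s k = 0"
  shows "m \<ge> 1 \<Longrightarrow> a m = 0"
proof -
  have s0: "\<forall>k. s k = 0"
  proof (rule ccontr)
    assume "\<not> (\<forall>k. s k = 0)"
    then obtain k1 where k1: "s k1 \<noteq> 0" by auto
    let ?S = "{k. s k \<noteq> 0}"
    have finS: "finite ?S"
    proof (rule finite_subset[of _ "{..<K}"])
      show "?S \<subseteq> {..<K}" using sz by (auto simp: not_less[symmetric])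
    qed simp
    define k0 where "k0 = Max ?S"
    have "k0 \<in> ?S" unfolding k0_def using k1 finS by (intro Max_in) auto
    then have sk0: "s k0 \<noteq> 0" by simp
    have sk0': "s k = 0" if "k0 < k" for k
      using that Max_ge[OF finS, of k] unfolding k0_def by (cases "s k = 0") auto
    let ?A = "{m. a m \<noteq> 0}"
    have finA: "finite ?A"
    proof (rule finite_subset[of _ "{..<K}"])
      show "?A \<subseteq> {..<K}" using az by (auto simp: not_less[symmetric])
    qed simp
    define m0 where "m0 = Max ?A"
    have "0 \<in> ?A" using a0 by simp
    then have "m0 \<in> ?A" unfolding m0_def using finA by (intro Max_in) auto
    then have am0: "a m0 \<noteq> 0" by simp
    have am0': "a m = 0" if "m0 < m" for m
      using that Max_ge[OF finA, of m] unfolding m0_def by (cases "a m = 0") auto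
    have "a (Suc (m0 + k0 + 1)) = (\<Sum>j<m0 + k0 + 1. a j * s (m0 + k0 + 1 - 1 - j))" by (rule rec)
    also have "\<dots> = a m0 * s (m0 + k0 + 1 - 1 - m0)"
    proof (rule sum_single)
      fix j assume j: "j < m0 + k0 + 1" "j \<noteq> m0"
      show "a j * s (m0 + k0 + 1 - 1 - j) = 0"
      proof (cases "j < m0")
        case True then show ?thesis using sk0'[of "m0 + k0 + 1 - 1 - j"] by simp
      next
        case False then show ?thesis using am0'[of j] j by simp
      qed
    qed simp
    also have "\<dots> \<noteq> 0" using am0 sk0 by simp
    finally have "a (Suc (m0 + k0 + 1)) \<noteq> 0" .
    with am0'[of "Suc (m0 + k0 + 1)"] show False by simp
  qed
  assume "m \<ge> 1"
  then obtain m' where "m = Suc m'" by (cases m) auto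
  then show "a m = 0" using rec s0 by simp
qed

lemma projk_carrier: "proj_k n x \<in> carrier_mat (Suc n) (Suc n)"
  unfolding proj_k_def by simp

lemma projk_entry: "i \<le> n \<Longrightarrow> j \<le> n \<Longrightarrow> proj_k n x $$ (i,j) = (if (i < n) = (j < n) then x $$ (i,j) else 0)"
  unfolding proj_k_def by simp

lemma sum_lessThan_Suc_split: "(\<Sum>l<Suc n. f l) = (\<Sum>l<n. f l) + f n"
  by simp

lemma C1:
  assumes x: "x \<in> carrier_mat (Suc n) (Suc n)"
    and xn: "x ^\<^sub>m K1 = 0\<^sub>m (Suc n) (Suc n)"
    and pn: "proj_k n x ^\<^sub>m K2 = 0\<^sub>m (Suc n) (Suc n)"
  shows "m \<ge> 1 \<Longrightarrow> (x ^\<^sub>m m) $$ (n,n) = 0"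
proof -
  define P where "P = proj_k n x"
  have Pc: "P \<in> carrier_mat (Suc n) (Suc n)" unfolding P_def by (rule projk_carrier)
  have Pe: "i \<le> n \<Longrightarrow> j \<le> n \<Longrightarrow> P $$ (i,j) = (if (i < n) = (j < n) then x $$ (i,j) else 0)" for i j
    unfolding P_def by (rule projk_entry)
  define d where "d = x $$ (n,n)"
  have Pblock: "(\<forall>i<n. (P ^\<^sub>m k) $$ (i,n) = 0 \<and> (P ^\<^sub>m k) $$ (n,i) = 0) \<and> (P ^\<^sub>m k) $$ (n,n) = d ^ k" for k
  proof (induct k)
    case 0 then show ?case using Pc by simp
  next
    case (Suc k)
    have e: "(P ^\<^sub>m Suc k) $$ (i,j) = (\<Sum>l<n. (P ^\<^sub>m k) $$ (i,l) * P $$ (l,j)) + (P ^\<^sub>m k) $$ (i,n) * P $$ (n,j)"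
      if "i \<le> n" "j \<le> n" for i j
      unfolding pow_mat.simps(2) using that
      by (subst mult_entry[OF pow_carrier_mat[OF Pc] Pc], auto)
    show ?case
    proof (intro conjI allI impI)
      fix i assume i: "i < n"
      show "(P ^\<^sub>m Suc k) $$ (i,n) = 0" using e[of i n] i Suc Pe by simp
      show "(P ^\<^sub>m Suc k) $$ (n,i) = 0" using e[of n i] i Suc Pe by simp
    next
      show "(P ^\<^sub>m Suc k) $$ (n,n) = d ^ Suc k" using e[of n n] Suc Pe unfolding d_def by simp
    qed
  qed
  have d0: "d = 0"
  proof -
    have "(P ^\<^sub>m K2) $$ (n,n) = 0" using pn unfolding P_def by simp
    then have "d ^ K2 = 0" using Pblock by simp
    then show ?thesis by simp
  qed
  have Prow: "(P ^\<^sub>m Suc k) $$ (i,j) = (\<Sum>l<n. x $$ (i,l) * (P ^\<^sub>m k) $$ (l,j))" if "i < n" "j < n" for i j k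
  proof -
    have "(P ^\<^sub>m Suc k) $$ (i,j) = (P * P ^\<^sub>m k) $$ (i,j)" using pow_Suc_left[OF Pc] by simp
    also have "\<dots> = (\<Sum>l<n. P $$ (i,l) * (P ^\<^sub>m k) $$ (l,j)) + P $$ (i,n) * (P ^\<^sub>m k) $$ (n,j)"
      using that by (subst mult_entry[OF Pc pow_carrier_mat[OF Pc]], auto)
    also have "\<dots> = (\<Sum>l<n. x $$ (i,l) * (P ^\<^sub>m k) $$ (l,j))"
      using that Pe by simp
    finally show ?thesis .
  qed
  define a where "a m = (x ^\<^sub>m m) $$ (n,n)" for m
  define c where "c k i = (\<Sum>l<n. (P ^\<^sub>m k) $$ (i,l) * x $$ (l,n))" for k i
  define s where "s k = (\<Sum>l<n. x $$ (n,l) * c k l)" for k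
  have xrec: "(x ^\<^sub>m Suc m) $$ (i,n) = (\<Sum>l<n. x $$ (i,l) * (x ^\<^sub>m m) $$ (l,n)) + x $$ (i,n) * a m"
    if "i \<le> n" for i m
  proof -
    have "(x ^\<^sub>m Suc m) $$ (i,n) = (x * x ^\<^sub>m m) $$ (i,n)" using pow_Suc_left[OF x] by simp
    also have "\<dots> = (\<Sum>l<n. x $$ (i,l) * (x ^\<^sub>m m) $$ (l,n)) + x $$ (i,n) * a m"
      using that unfolding a_def by (subst mult_entry[OF x pow_carrier_mat[OF x]], auto)
    finally show ?thesis .
  qed
  have c0: "c 0 i = x $$ (i,n)" if "i < n" for i
  proof -
    have "c 0 i = (\<Sum>l<n. (if i = l then 1 else 0) * x $$ (l,n))"
      unfolding c_def using that x Pc by (intro sum.cong) auto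
    also have "\<dots> = x $$ (i,n)" using that by (subst sum_single[of i]) auto
    finally show ?thesis .
  qed
  have cS: "c (Suc k) i = (\<Sum>l<n. x $$ (i,l) * c k l)" if "i < n" for k i
  proof -
    have "c (Suc k) i = (\<Sum>l'<n. (\<Sum>l<n. x $$ (i,l) * (P ^\<^sub>m k) $$ (l,l')) * x $$ (l',n))"
      unfolding c_def using that by (intro sum.cong refl) (simp add: Prow del: pow_mat.simps(2))
    also have "\<dots> = (\<Sum>l'<n. \<Sum>l<n. x $$ (i,l) * ((P ^\<^sub>m k) $$ (l,l') * x $$ (l',n)))"
      by (simp add: sum_distrib_right mult.assoc)
    also have "\<dots> = (\<Sum>l<n. \<Sum>l'<n. x $$ (i,l) * ((P ^\<^sub>m k) $$ (l,l') * x $$ (l',n)))"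
      by (rule sum.swap)
    also have "\<dots> = (\<Sum>l<n. x $$ (i,l) * c k l)"
      unfolding c_def by (simp add: sum_distrib_left)
    finally show ?thesis .
  qed
  have W: "\<forall>i<n. (x ^\<^sub>m m) $$ (i,n) = (\<Sum>j<m. a j * c (m - 1 - j) i)" for m
  proof (induct m)
    case 0 then show ?case using x by simp
  next
    case (Suc m)
    show ?case
    proof (intro allI impI)
      fix i assume i: "i < n"
      have "(x ^\<^sub>m Suc m) $$ (i,n) = (\<Sum>l<n. x $$ (i,l) * (\<Sum>j<m. a j * c (m - 1 - j) l)) + x $$ (i,n) * a m"
        using xrec[of i m] i Suc by simp
      also have "(\<Sum>l<n. x $$ (i,l) * (\<Sum>j<m. a j * c (m - 1 - j) l)) = (\<Sum>j<m. a j * c (Suc m - 1 - j) i)"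
      proof -
        have "(\<Sum>l<n. x $$ (i,l) * (\<Sum>j<m. a j * c (m - 1 - j) l)) = (\<Sum>l<n. \<Sum>j<m. a j * (x $$ (i,l) * c (m - 1 - j) l))"
          by (simp add: sum_distrib_left mult.assoc mult.left_commute)
        also have "\<dots> = (\<Sum>j<m. \<Sum>l<n. a j * (x $$ (i,l) * c (m - 1 - j) l))" by (rule sum.swap)
        also have "\<dots> = (\<Sum>j<m. a j * c (Suc (m - 1 - j)) i)"
          using i by (simp add: cS sum_distrib_left)
        also have "\<dots> = (\<Sum>j<m. a j * c (Suc m - 1 - j) i)"
          by (intro sum.cong) (auto simp: Suc_diff_Suc)
        finally show ?thesis .
      qed
      also have "x $$ (i,n) = c (Suc m - 1 - m) i" using c0[OF i] by simp
      finally show "(x ^\<^sub>m Suc m) $$ (i,n) = (\<Sum>j<Suc m. a j * c (Suc m - 1 - j) i)"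
        by (simp add: mult.commute)
    qed
  qed
  have arec: "a (Suc m) = (\<Sum>j<m. a j * s (m - 1 - j))" for m
  proof -
    have "a (Suc m) = (\<Sum>l<n. x $$ (n,l) * (\<Sum>j<m. a j * c (m - 1 - j) l))"
      using xrec[of n m] W[of m] d0 unfolding a_def d_def by simp
    also have "\<dots> = (\<Sum>l<n. \<Sum>j<m. a j * (x $$ (n,l) * c (m - 1 - j) l))"
      by (simp add: sum_distrib_left mult.assoc mult.left_commute)
    also have "\<dots> = (\<Sum>j<m. \<Sum>l<n. a j * (x $$ (n,l) * c (m - 1 - j) l))" by (rule sum.swap)
    also have "\<dots> = (\<Sum>j<m. a j * s (m - 1 - j))" unfolding s_def by (simp add: sum_distrib_left)
    finally show ?thesis .
  qed
  have a0: "a 0 = 1" unfolding a_def using x by simp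
  have az: "a m = 0" if "m \<ge> max K1 K2" for m
  proof -
    have "x ^\<^sub>m m = 0\<^sub>m (Suc n) (Suc n)" using pow_zero_ge[OF x xn] that by simp
    then show ?thesis unfolding a_def by simp
  qed
  have sz: "s k = 0" if "k \<ge> max K1 K2" for k
  proof -
    have "P ^\<^sub>m k = 0\<^sub>m (Suc n) (Suc n)" using pow_zero_ge[OF Pc pn[folded P_def]] that by simp
    then show ?thesis unfolding s_def c_def by simp
  qed
  assume "m \<ge> 1"
  from seq_lemma[of a s, OF a0 arec az sz this] show "(x ^\<^sub>m m) $$ (n,n) = 0" unfolding a_def .
qed


definition typeP :: "nat \<Rightarrow> nat \<Rightarrow> complex mat \<Rightarrow> complex mat \<Rightarrow> bool" where
  "typeP n p g h \<longleftrightarrow> p \<le> n \<and> (\<forall>j<p. g $$ (n,j) = 0) \<and> (\<forall>j. p < j \<and> j \<le> n \<longrightarrow> h $$ (j,n) = 0)"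

lemma conj_entry:
  assumes "g \<in> carrier_mat N N" "A \<in> carrier_mat N N" "h \<in> carrier_mat N N" "a < N" "b < N"
  shows "(g * A * h) $$ (a,b) = (\<Sum>i<N. g $$ (a,i) * (\<Sum>j<N. A $$ (i,j) * h $$ (j,b)))"
proof -
  have "g * A * h = g * (A * h)" using assms by (simp add: assoc_mult_mat[of _ N N _ N _ N])
  moreover have "(g * (A * h)) $$ (a,b) = (\<Sum>i<N. g $$ (a,i) * (A * h) $$ (i,b))"
    by (rule mult_entry, insert assms, auto)
  moreover have "(\<Sum>i<N. g $$ (a,i) * (A * h) $$ (i,b)) = (\<Sum>i<N. g $$ (a,i) * (\<Sum>j<N. A $$ (i,j) * h $$ (j,b)))"
    by (intro sum.cong refl, subst mult_entry[of A N N h N], insert assms, auto)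
  ultimately show ?thesis by simp
qed

lemma partC:
  assumes gh: "inv_pair (Suc n) g h" and u: "u \<in> strict_upper_tri (Suc n)"
    and nz: "(g * u * h) ^\<^sub>m n \<noteq> 0\<^sub>m (Suc n) (Suc n)"
    and nil: "nilpotent_mat (Suc n) (proj_k n (g * u * h))"
  shows "\<exists>p. typeP n p g h"
proof -
  have g: "g \<in> carrier_mat (Suc n) (Suc n)" and h: "h \<in> carrier_mat (Suc n) (Suc n)"
    and gh1: "g * h = 1\<^sub>m (Suc n)" using gh unfolding inv_pair_def by auto
  have uc: "u \<in> carrier_mat (Suc n) (Suc n)" using su_carrier[OF u] .
  have un: "u ^\<^sub>m n \<noteq> 0\<^sub>m (Suc n) (Suc n)"
  proof
    assume "u ^\<^sub>m n = 0\<^sub>m (Suc n) (Suc n)"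
    then have "(g * u * h) ^\<^sub>m n = g * 0\<^sub>m (Suc n) (Suc n) * h" using pow_conj[OF gh uc] by simp
    also have "\<dots> = 0\<^sub>m (Suc n) (Suc n)" using g h by simp
    finally show False using nz by simp
  qed
  have sd: "\<And>j. j < n \<Longrightarrow> u $$ (j, Suc j) \<noteq> 0" using su_superdiag[OF u un] .
  define x where "x = g * u * h"
  have xc: "x \<in> carrier_mat (Suc n) (Suc n)" unfolding x_def using g h uc by simp
  have xn: "x ^\<^sub>m Suc n = 0\<^sub>m (Suc n) (Suc n)"
    unfolding x_def pow_conj[OF gh uc] su_nilpotent[OF u] using g h by simp
  from nil obtain K2 where K2: "proj_k n x ^\<^sub>m K2 = 0\<^sub>m (Suc n) (Suc n)"
    unfolding nilpotent_mat_def x_def by auto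
  have van: "(\<Sum>i<Suc n. g $$ (n,i) * (\<Sum>j<Suc n. (u ^\<^sub>m m) $$ (i,j) * h $$ (j,n))) = 0" if "m \<ge> 1" for m
  proof -
    have "(x ^\<^sub>m m) $$ (n,n) = 0" using C1[OF xc xn K2 that] .
    moreover have "x ^\<^sub>m m = g * u ^\<^sub>m m * h" unfolding x_def by (rule pow_conj[OF gh uc])
    ultimately show ?thesis using conj_entry[OF g pow_carrier_mat[OF uc] h, of n n m] by simp
  qed
  have FE: "(\<Sum>i<Suc n. g $$ (n,i) * h $$ (i,n)) \<noteq> 0"
  proof -
    have "(g * h) $$ (n,n) = (\<Sum>i<Suc n. g $$ (n,i) * h $$ (i,n))" using mult_entry[OF g h] by simp
    then show ?thesis using gh1 by simp
  qed
  from C3[OF u sd FE van] obtain p where "p \<le> n" "\<forall>j<p. g $$ (n,j) = 0"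
    "\<forall>j. p < j \<and> j < Suc n \<longrightarrow> h $$ (j,n) = 0" by blast
  then have "typeP n p g h" unfolding typeP_def by auto
  then show ?thesis by blast
qed


lemma ut_carrier: "A \<in> upper_tri N \<Longrightarrow> A \<in> carrier_mat N N"
  unfolding upper_tri_def by auto

lemma ut_entry: "A \<in> upper_tri N \<Longrightarrow> i < N \<Longrightarrow> j < N \<Longrightarrow> j < i \<Longrightarrow> A $$ (i,j) = 0"
  unfolding upper_tri_def by auto

lemma ut_I: "A \<in> carrier_mat N N \<Longrightarrow> (\<And>i j. i < N \<Longrightarrow> j < N \<Longrightarrow> j < i \<Longrightarrow> A $$ (i,j) = 0) \<Longrightarrow> A \<in> upper_tri N"
  unfolding upper_tri_def by auto

lemma inv_cancel:
  assumes "inv_pair N a b" "Y \<in> carrier_mat N M"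
  shows "a * (b * Y) = Y" "b * (a * Y) = Y"
proof -
  from assms have a: "a \<in> carrier_mat N N" and b: "b \<in> carrier_mat N N" and ab: "a * b = 1\<^sub>m N" "b * a = 1\<^sub>m N"
    unfolding inv_pair_def by auto
  show "a * (b * Y) = Y" using a b assms(2) ab by (simp add: assoc_mult_mat[symmetric, of a N N b N Y M])
  show "b * (a * Y) = Y" using a b assms(2) ab by (simp add: assoc_mult_mat[symmetric, of b N N a N Y M])
qed

lemma ut_mult:
  assumes A: "A \<in> upper_tri N" and B: "B \<in> upper_tri N"
  shows "A * B \<in> upper_tri N"
proof (rule ut_I)
  show "A * B \<in> carrier_mat N N" using ut_carrier[OF A] ut_carrier[OF B] by simp
  fix i j assume ij: "i < N" "j < N" "j < i"
  have "(A * B) $$ (i,j) = (\<Sum>l<N. A $$ (i,l) * B $$ (l,j))"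
    by (rule mult_entry[OF ut_carrier[OF A] ut_carrier[OF B]], insert ij, auto)
  also have "\<dots> = 0"
  proof (rule sum.neutral, intro ballI)
    fix l assume l: "l \<in> {..<N}"
    show "A $$ (i,l) * B $$ (l,j) = 0"
    proof (cases "l < i")
      case True then show ?thesis using ut_entry[OF A] ij l by simp
    next
      case False then show ?thesis using ut_entry[OF B] ij l by simp
    qed
  qed
  finally show "(A * B) $$ (i,j) = 0" .
qed

lemma ut_one: "1\<^sub>m N \<in> upper_tri N" by (rule ut_I) auto

lemma ut_pow: "A \<in> upper_tri N \<Longrightarrow> A ^\<^sub>m k \<in> upper_tri N"
proof (induct k)
  case 0 then show ?case using ut_carrier[OF 0] ut_one by simp
next
  case (Suc k) then show ?case using ut_mult by simp
qed

lemma ut_pow_diag: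
  assumes A: "A \<in> upper_tri N" and i: "i < N"
  shows "(A ^\<^sub>m k) $$ (i,i) = A $$ (i,i) ^ k"
proof (induct k)
  case 0 then show ?case using ut_carrier[OF A] i by simp
next
  case (Suc k)
  have Ac: "A \<in> carrier_mat N N" using ut_carrier[OF A] .
  have "(A ^\<^sub>m Suc k) $$ (i,i) = (\<Sum>l<N. (A ^\<^sub>m k) $$ (i,l) * A $$ (l,i))"
    unfolding pow_mat.simps(2) by (rule mult_entry[OF pow_carrier_mat[OF Ac] Ac], insert i, auto)
  also have "\<dots> = (A ^\<^sub>m k) $$ (i,i) * A $$ (i,i)"
  proof (rule sum_single[OF i])
    fix l assume l: "l < N" "l \<noteq> i"
    show "(A ^\<^sub>m k) $$ (i,l) * A $$ (l,i) = 0"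
    proof (cases "l < i")
      case True then show ?thesis using ut_entry[OF ut_pow[OF A]] i l by simp
    next
      case False then show ?thesis using ut_entry[OF A] i l by simp
    qed
  qed
  finally show ?case using Suc by simp
qed

lemma ut_det_diag:
  assumes A: "A \<in> upper_tri N"
  shows "det A = (\<Prod>i = 0..<N. A $$ (i,i))"
proof -
  have Ac: "A \<in> carrier_mat N N" using ut_carrier[OF A] .
  have "upper_triangular A" unfolding upper_triangular_def using ut_entry[OF A] Ac by auto
  then have "det A = prod_list (diag_mat A)" using det_upper_triangular Ac by blast
  then show ?thesis unfolding prod_list_diag_prod using Ac by simp
qed

lemma ut_inv:
  assumes A: "A \<in> upper_tri N" and AB: "inv_pair N A B"
  shows "B \<in> upper_tri N"
proof -
  have Ac: "A \<in> carrier_mat N N" and Bc: "B \<in> carrier_mat N N" and ab: "A * B = 1\<^sub>m N"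
    using AB unfolding inv_pair_def by auto
  have "det A \<noteq> 0" using inv_pair_det[OF AB] by auto
  then have dA: "A $$ (i,i) \<noteq> 0" if "i < N" for i
    using ut_det_diag[OF A] that by (auto simp: prod_zero_iff)
  have main: "\<forall>i. j < i \<longrightarrow> i < N \<longrightarrow> N - i = t \<longrightarrow> B $$ (i,j) = 0" if j: "j < N" for j t
  proof (induct t rule: less_induct)
    case (less t)
    show ?case
    proof (intro allI impI)
      fix i assume i: "j < i" "i < N" "N - i = t"
      have "0 = (A * B) $$ (i,j)" using ab i j by simp
      also have "\<dots> = (\<Sum>l<N. A $$ (i,l) * B $$ (l,j))" by (rule mult_entry[OF Ac Bc], insert i j, auto)
      also have "\<dots> = A $$ (i,i) * B $$ (i,j)"
      proof (rule sum_single)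
        show "i < N" using i by simp
        fix l assume l: "l < N" "l \<noteq> i"
        show "A $$ (i,l) * B $$ (l,j) = 0"
        proof (cases "l < i")
          case True then show ?thesis using ut_entry[OF A] i l by simp
        next
          case False then have "N - l < t" using l i by simp
          then show ?thesis using less[of "N - l"] False l i by simp
        qed
      qed
      finally show "B $$ (i,j) = 0" using dA[OF i(2)] by simp
    qed
  qed
  show ?thesis by (rule ut_I[OF Bc], insert main, auto)
qed

lemma conj_set_comp:
  assumes "a \<in> carrier_mat N N" "a' \<in> carrier_mat N N" "b \<in> carrier_mat N N" "b' \<in> carrier_mat N N"
    "S \<subseteq> carrier_mat N N"
  shows "conj_set a a' (conj_set b b' S) = conj_set (a * b) (b' * a') S"
  unfolding conj_set_def image_image
proof (rule image_cong[OF refl])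
  fix A assume "A \<in> S"
  then have A: "A \<in> carrier_mat N N" using assms by auto
  show "a * (b * A * b') * a' = a * b * A * (b' * a')"
    using assms A by (simp add: assoc_mult_mat[of _ N N _ N _ N])
qed

lemma ut_subset: "upper_tri N \<subseteq> carrier_mat N N" using ut_carrier by auto

lemma conj_set_ut:
  assumes bb: "inv_pair N b b'" and b: "b \<in> upper_tri N"
  shows "conj_set b b' (upper_tri N) = upper_tri N"
proof -
  have b': "b' \<in> upper_tri N" using ut_inv[OF b bb] .
  have bc: "b \<in> carrier_mat N N" "b' \<in> carrier_mat N N" using bb unfolding inv_pair_def by auto
  show ?thesis
  proof
    show "conj_set b b' (upper_tri N) \<subseteq> upper_tri N"
      unfolding conj_set_def using ut_mult b b' by auto
    show "upper_tri N \<subseteq> conj_set b b' (upper_tri N)"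
    proof
      fix A assume A: "A \<in> upper_tri N"
      have Ac: "A \<in> carrier_mat N N" using ut_carrier[OF A] .
      have "A = b * (b' * A * b) * b'"
      proof -
        have "b * (b' * A * b) * b' = b * (b' * (A * (b * b')))" using bc Ac by (simp add: assoc_mult_mat[of _ N N _ N _ N])
        also have "\<dots> = A" using bb Ac unfolding inv_pair_def by (simp add: inv_cancel[OF bb])
        finally show ?thesis by simp
      qed
      moreover have "b' * A * b \<in> upper_tri N" using ut_mult b b' A by simp
      ultimately show "A \<in> conj_set b b' (upper_tri N)" unfolding conj_set_def by auto
    qed
  qed
qed


lemma su_kernel:
  assumes u: "u \<in> strict_upper_tri (Suc n)"
    and sd: "\<And>j. j < n \<Longrightarrow> u $$ (j, Suc j) \<noteq> 0"
    and kv: "\<And>i. j \<le> i \<Longrightarrow> i < Suc n \<Longrightarrow> (\<Sum>l<Suc n. u $$ (i,l) * v l) = 0"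
  shows "j < i \<Longrightarrow> i < Suc n \<Longrightarrow> v i = 0"
proof (induct "Suc n - i" arbitrary: i rule: less_induct)
  case (less i)
  then obtain i0 where i0: "i = Suc i0" by (cases i) auto
  have "0 = (\<Sum>l<Suc n. u $$ (i0,l) * v l)" using kv[of i0] less i0 by simp
  also have "\<dots> = u $$ (i0, i) * v i"
  proof (rule sum_single)
    show "i < Suc n" using less by simp
    fix l assume l: "l < Suc n" "l \<noteq> i"
    show "u $$ (i0, l) * v l = 0"
    proof (cases "l < i")
      case True then have "l \<le> i0" using i0 by simp
      then show ?thesis using su_entry[OF u, of i0 l] l less i0 by simp
    next
      case False then have "Suc n - l < Suc n - i" using l less by simp
      then show ?thesis using less(1)[of l] False l less by simp
    qed
  qed
  finally show "v i = 0" using sd[of i0] less i0 by simp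
qed

lemma jb_ut: "jordan_block N (0::complex) \<in> upper_tri N"
  by (rule ut_I) auto

lemma borel_eq_ut:
  assumes ss: "inv_pair (Suc n) s s'" and mm: "inv_pair (Suc n) m m'"
    and eq: "conj_set s s' (upper_tri (Suc n)) = conj_set m m' (upper_tri (Suc n))"
  shows "m' * s \<in> upper_tri (Suc n)"
proof -
  let ?N = "Suc n"
  let ?B = "upper_tri ?N"
  have sc: "s \<in> carrier_mat ?N ?N" "s' \<in> carrier_mat ?N ?N" using ss unfolding inv_pair_def by auto
  have mc: "m \<in> carrier_mat ?N ?N" "m' \<in> carrier_mat ?N ?N" using mm unfolding inv_pair_def by auto
  define \<beta> where "\<beta> = m' * s"
  define \<gamma> where "\<gamma> = s' * m"
  have bg: "inv_pair ?N \<beta> \<gamma>" unfolding \<beta>_def \<gamma>_def by (rule inv_pair_mult[OF inv_pair_sym[OF mm] ss])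
  have bc: "\<beta> \<in> carrier_mat ?N ?N" "\<gamma> \<in> carrier_mat ?N ?N" using bg unfolding inv_pair_def by auto
  have stab: "\<beta> * z * \<gamma> \<in> ?B" if z: "z \<in> ?B" for z
  proof -
    have zc: "z \<in> carrier_mat ?N ?N" using ut_carrier[OF z] .
    have "s * z * s' \<in> conj_set s s' ?B" unfolding conj_set_def using z by auto
    then have "s * z * s' \<in> conj_set m m' ?B" using eq by simp
    then obtain z' where z': "z' \<in> ?B" "s * z * s' = m * z' * m'" unfolding conj_set_def by auto
    have z'c: "z' \<in> carrier_mat ?N ?N" using ut_carrier[OF z'(1)] .
    have "\<beta> * z * \<gamma> = m' * (s * z * s') * m" unfolding \<beta>_def \<gamma>_def
      using sc mc zc by (simp add: assoc_mult_mat[of _ ?N ?N _ ?N _ ?N])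
    also have "\<dots> = m' * (m * (z' * (m' * m)))" unfolding z'(2)
      using sc mc z'c by (simp add: assoc_mult_mat[of _ ?N ?N _ ?N _ ?N])
    also have "\<dots> = z'" using inv_cancel[OF mm] mm z'c unfolding inv_pair_def by simp
    finally show ?thesis using z' by simp
  qed
  define J where "J = jordan_block ?N (0::complex)"
  have Jc: "J \<in> carrier_mat ?N ?N" unfolding J_def by simp
  have Jpow: "J ^\<^sub>m k = mat ?N ?N (\<lambda>(i,j). if j \<ge> i \<and> j - i = k then 1 else 0)" for k
    unfolding J_def by (rule jordan_block_zero_pow)
  define u where "u = \<beta> * J * \<gamma>"
  have uB: "u \<in> ?B" unfolding u_def J_def by (rule stab[OF jb_ut])
  have uc: "u \<in> carrier_mat ?N ?N" using ut_carrier[OF uB] .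
  have upow: "u ^\<^sub>m k = \<beta> * J ^\<^sub>m k * \<gamma>" for k unfolding u_def by (rule pow_conj[OF bg Jc])
  have JN: "J ^\<^sub>m ?N = 0\<^sub>m ?N ?N" unfolding Jpow by (rule eq_matI) auto
  have uN: "u ^\<^sub>m ?N = 0\<^sub>m ?N ?N" unfolding upow JN using bc by simp
  have usu: "u \<in> strict_upper_tri ?N"
    unfolding strict_upper_tri_def
  proof (intro CollectI conjI uc allI impI)
    fix i j assume ij: "i < ?N" "j < ?N" "j \<le> i"
    show "u $$ (i,j) = 0"
    proof (cases "j < i")
      case True then show ?thesis using ut_entry[OF uB] ij by simp
    next
      case False
      then have "j = i" using ij by simp
      have "u $$ (i,i) ^ ?N = 0" using ut_pow_diag[OF uB ij(1), of ?N] uN ij by simp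
      then show ?thesis using \<open>j = i\<close> by auto
    qed
  qed
  have un: "u ^\<^sub>m n \<noteq> 0\<^sub>m ?N ?N"
  proof
    assume z: "u ^\<^sub>m n = 0\<^sub>m ?N ?N"
    have "J ^\<^sub>m n = \<gamma> * (\<beta> * (J ^\<^sub>m n * (\<gamma> * \<beta>)))"
      using inv_cancel(2)[OF bg pow_carrier_mat[OF Jc, of n]] bg Jc unfolding inv_pair_def by simp
    also have "\<dots> = \<gamma> * (\<beta> * J ^\<^sub>m n * \<gamma>) * \<beta>"
      using bc Jc by (simp add: assoc_mult_mat[of _ ?N ?N _ ?N _ ?N])
    also have "\<dots> = 0\<^sub>m ?N ?N" using z[unfolded upow] bc by simp
    finally have "(J ^\<^sub>m n) $$ (0,n) = 0" by simp
    then show False unfolding Jpow by simp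
  qed
  have sd: "\<And>j. j < n \<Longrightarrow> u $$ (j, Suc j) \<noteq> 0" using su_superdiag[OF usu un] .
  have ub: "u * \<beta> = \<beta> * J"
  proof -
    have "u * \<beta> = \<beta> * (J * (\<gamma> * \<beta>))" unfolding u_def using bc Jc by (simp add: assoc_mult_mat[of _ ?N ?N _ ?N _ ?N])
    also have "\<dots> = \<beta> * J" using bg Jc unfolding inv_pair_def by simp
    finally show ?thesis .
  qed
  have col: "\<forall>i. j < i \<and> i < ?N \<longrightarrow> \<beta> $$ (i,j) = 0" if "j < ?N" for j
    using that
  proof (induct j)
    case 0
    have kv: "(\<Sum>l<?N. u $$ (i,l) * \<beta> $$ (l,0)) = 0" if "0 \<le> i" "i < ?N" for i
    proof -
      have "(\<Sum>l<?N. u $$ (i,l) * \<beta> $$ (l,0)) = (u * \<beta>) $$ (i,0)"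
        using mult_entry[OF uc bc(1), of i 0] that by simp
      also have "\<dots> = (\<Sum>l<?N. \<beta> $$ (i,l) * J $$ (l,0))"
        unfolding ub using mult_entry[OF bc(1) Jc, of i 0] that by simp
      also have "\<dots> = 0" using that unfolding J_def by (intro sum.neutral) auto
      finally show ?thesis .
    qed
    show ?case using su_kernel[OF usu sd kv] by auto
  next
    case (Suc j)
    have IH: "\<forall>i. j < i \<and> i < ?N \<longrightarrow> \<beta> $$ (i,j) = 0" using Suc by simp
    have kv: "(\<Sum>l<?N. u $$ (i,l) * \<beta> $$ (l,Suc j)) = 0" if "Suc j \<le> i" "i < ?N" for i
    proof -
      have "(\<Sum>l<?N. u $$ (i,l) * \<beta> $$ (l,Suc j)) = (u * \<beta>) $$ (i,Suc j)"
        using mult_entry[OF uc bc(1), of i "Suc j"] that Suc by simp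
      also have "\<dots> = (\<Sum>l<?N. \<beta> $$ (i,l) * J $$ (l,Suc j))"
        unfolding ub using mult_entry[OF bc(1) Jc, of i "Suc j"] that Suc by simp
      also have "\<dots> = \<beta> $$ (i,j) * J $$ (j, Suc j)"
        by (rule sum_single, insert Suc, auto simp: J_def)
      also have "\<dots> = 0" using IH that by simp
      finally show ?thesis .
    qed
    show ?case using su_kernel[OF usu sd kv] by auto
  qed
  show ?thesis unfolding \<beta>_def[symmetric] by (rule ut_I[OF bc(1)], insert col, auto)
qed


lemma det_tendsto:
  assumes A: "\<And>k. A k \<in> carrier_mat M M" and A0: "A0 \<in> carrier_mat M M"
    and conv: "\<And>i j. i < M \<Longrightarrow> j < M \<Longrightarrow> (\<lambda>k. A k $$ (i,j)) \<longlonglongrightarrow> A0 $$ (i,j)"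
  shows "(\<lambda>k. det (A k)) \<longlonglongrightarrow> (det A0 :: complex)"
proof -
  let ?P = "{p. p permutes {0..<M}}"
  have "(\<lambda>k. \<Sum>p\<in>?P. signof p * (\<Prod>i = 0..<M. A k $$ (i, p i))) \<longlonglongrightarrow>
        (\<Sum>p\<in>?P. signof p * (\<Prod>i = 0..<M. A0 $$ (i, p i)))"
  proof (rule tendsto_sum)
    fix p assume "p \<in> ?P"
    then have pm: "p permutes {0..<M}" by simp
    show "(\<lambda>k. signof p * (\<Prod>i = 0..<M. A k $$ (i, p i))) \<longlonglongrightarrow> signof p * (\<Prod>i = 0..<M. A0 $$ (i, p i))"
    proof (rule tendsto_mult[OF tendsto_const], rule tendsto_prod)
      fix i assume i: "i \<in> {0..<M}"
      then have "p i \<in> {0..<M}" using permutes_in_image[OF pm] by simp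
      then show "(\<lambda>k. A k $$ (i, p i)) \<longlonglongrightarrow> A0 $$ (i, p i)" using conv i by simp
    qed
  qed
  then show ?thesis using det_def'[OF A] det_def'[OF A0] by simp
qed

lemma adj_entry: "A \<in> carrier_mat M M \<Longrightarrow> i < M \<Longrightarrow> j < M \<Longrightarrow>
  adj_mat A $$ (i,j) = (-1)^(j+i) * det (mat_delete A j i)"
  unfolding adj_mat_def cofactor_def by simp

lemma adj_tendsto:
  assumes A: "\<And>k. A k \<in> carrier_mat M M" and A0: "A0 \<in> carrier_mat M M"
    and conv: "\<And>i j. i < M \<Longrightarrow> j < M \<Longrightarrow> (\<lambda>k. A k $$ (i,j)) \<longlonglongrightarrow> A0 $$ (i,j)"
    and ij: "i < M" "j < M"
  shows "(\<lambda>k. adj_mat (A k) $$ (i,j)) \<longlonglongrightarrow> (adj_mat A0 $$ (i,j) :: complex)"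
proof -
  have "(\<lambda>k. det (mat_delete (A k) j i)) \<longlonglongrightarrow> det (mat_delete A0 j i)"
  proof (rule det_tendsto[of _ "M - 1"])
    show "\<And>k. mat_delete (A k) j i \<in> carrier_mat (M - 1) (M - 1)" using mat_delete_carrier A by blast
    show "mat_delete A0 j i \<in> carrier_mat (M - 1) (M - 1)" using mat_delete_carrier A0 by blast
    fix a b assume ab: "a < M - 1" "b < M - 1"
    have dims: "\<And>k. dim_row (A k) = M" "\<And>k. dim_col (A k) = M" using A by auto
    show "(\<lambda>k. mat_delete (A k) j i $$ (a,b)) \<longlonglongrightarrow> mat_delete A0 j i $$ (a,b)"
      using ab A0 conv[of "if a < j then a else Suc a" "if b < i then b else Suc b"]
      unfolding mat_delete_def dims by auto
  qed
  then have "(\<lambda>k. (-1)^(j+i) * det (mat_delete (A k) j i)) \<longlonglongrightarrow> (-1)^(j+i) * det (mat_delete A0 j i)"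
    by (intro tendsto_intros)
  then show ?thesis using adj_entry[OF A ij] adj_entry[OF A0 ij] by simp
qed

lemma inv_entry:
  assumes gh: "inv_pair N g h" and ij: "i < N" "j < N"
  shows "h $$ (i,j) = adj_mat g $$ (i,j) / det g"
proof -
  have g: "g \<in> carrier_mat N N" and h: "h \<in> carrier_mat N N" and gh1: "g * h = 1\<^sub>m N"
    using gh unfolding inv_pair_def by auto
  have dg: "det g \<noteq> 0" using inv_pair_det[OF gh] by auto
  have aC: "adj_mat g \<in> carrier_mat N N" using adj_mat(1)[OF g] .
  have "adj_mat g = adj_mat g * (g * h)" using gh1 aC by simp
  also have "\<dots> = (adj_mat g * g) * h" using aC g h by (simp add: assoc_mult_mat[of _ N N _ N _ N])
  also have "\<dots> = det g \<cdot>\<^sub>m h" unfolding adj_mat(3)[OF g]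
    by (subst mult_smult_assoc_mat[of "1\<^sub>m N" N N h N], insert h, auto)
  finally have "adj_mat g $$ (i,j) = det g * h $$ (i,j)" using ij h by simp
  then show ?thesis using dg by simp
qed

lemma typeP_closed:
  assumes st: "\<And>k. inv_pair (Suc n) (s k) (s' k) \<and> typeP n p (s k) (s' k)"
    and gh: "inv_pair (Suc n) g h" and conv: "mat_converges (Suc n) s g"
  shows "typeP n p g h"
proof -
  have sc: "\<And>k. s k \<in> carrier_mat (Suc n) (Suc n)" using st unfolding inv_pair_def by blast
  have gc: "g \<in> carrier_mat (Suc n) (Suc n)" using gh unfolding inv_pair_def by blast
  have cv: "\<And>i j. i < Suc n \<Longrightarrow> j < Suc n \<Longrightarrow> (\<lambda>k. s k $$ (i,j)) \<longlonglongrightarrow> g $$ (i,j)"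
    using conv unfolding mat_converges_def by blast
  have pn: "p \<le> n" using st[of 0] unfolding typeP_def by blast
  have G: "g $$ (n,j) = 0" if j: "j < p" for j
  proof -
    have "(\<lambda>k. s k $$ (n,j)) \<longlonglongrightarrow> g $$ (n,j)" using cv[of n j] j pn by simp
    moreover have "(\<lambda>k. s k $$ (n,j)) = (\<lambda>k. 0)" using st j unfolding typeP_def by auto
    ultimately show ?thesis using LIMSEQ_unique tendsto_const by metis
  qed
  have H: "h $$ (j,n) = 0" if j: "p < j" "j \<le> n" for j
  proof -
    have "(\<lambda>k. adj_mat (s k) $$ (j,n) / det (s k)) \<longlonglongrightarrow> adj_mat g $$ (j,n) / det g"
    proof (rule tendsto_divide)
      show "(\<lambda>k. adj_mat (s k) $$ (j,n)) \<longlonglongrightarrow> adj_mat g $$ (j,n)"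
        by (rule adj_tendsto[OF sc gc cv], insert j, auto)
      show "(\<lambda>k. det (s k)) \<longlonglongrightarrow> det g" by (rule det_tendsto[OF sc gc cv])
      show "det g \<noteq> 0" using inv_pair_det[OF gh] by auto
    qed
    moreover have "(\<lambda>k. adj_mat (s k) $$ (j,n) / det (s k)) = (\<lambda>k. 0)"
    proof
      fix k
      have "adj_mat (s k) $$ (j,n) / det (s k) = s' k $$ (j,n)"
        using inv_entry[of "Suc n" "s k" "s' k" j n] st[of k] j by simp
      also have "\<dots> = 0" using st[of k] j unfolding typeP_def by auto
      finally show "adj_mat (s k) $$ (j,n) / det (s k) = 0" .
    qed
    ultimately have "adj_mat g $$ (j,n) / det g = 0" using LIMSEQ_unique tendsto_const by metis
    then show ?thesis using inv_entry[OF gh, of j n] j by simp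
  qed
  show ?thesis unfolding typeP_def using pn G H by blast
qed

lemma typeP_K:
  assumes t: "typeP n p g h" and k: "block_diag n k" "k \<in> carrier_mat (Suc n) (Suc n)"
    and k': "block_diag n k'" "k' \<in> carrier_mat (Suc n) (Suc n)"
    and g: "g \<in> carrier_mat (Suc n) (Suc n)" and h: "h \<in> carrier_mat (Suc n) (Suc n)"
  shows "typeP n p (k * g) (h * k')"
proof -
  have pn: "p \<le> n" using t unfolding typeP_def by auto
  have A: "(k * g) $$ (n,j) = 0" if "j < p" for j
  proof -
    have "(k * g) $$ (n,j) = (\<Sum>l<Suc n. k $$ (n,l) * g $$ (l,j))"
      by (rule mult_entry[OF k(2) g], insert that pn, auto)
    also have "\<dots> = k $$ (n,n) * g $$ (n,j)"
      by (rule sum_single, insert k(1), auto simp: block_diag_def)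
    also have "\<dots> = 0" using t that unfolding typeP_def by auto
    finally show ?thesis .
  qed
  have B: "(h * k') $$ (j,n) = 0" if "p < j" "j \<le> n" for j
  proof -
    have "(h * k') $$ (j,n) = (\<Sum>l<Suc n. h $$ (j,l) * k' $$ (l,n))"
      by (rule mult_entry[OF h k'(2)], insert that, auto)
    also have "\<dots> = h $$ (j,n) * k' $$ (n,n)"
      by (rule sum_single, insert k'(1), auto simp: block_diag_def)
    also have "\<dots> = 0" using t that unfolding typeP_def by auto
    finally show ?thesis .
  qed
  show ?thesis unfolding typeP_def using pn A B by auto
qed

lemma typeP_B:
  assumes t: "typeP n p g h" and b: "b \<in> upper_tri (Suc n)" and b': "b' \<in> upper_tri (Suc n)"
    and g: "g \<in> carrier_mat (Suc n) (Suc n)" and h: "h \<in> carrier_mat (Suc n) (Suc n)"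
  shows "typeP n p (g * b) (b' * h)"
proof -
  have pn: "p \<le> n" using t unfolding typeP_def by auto
  have A: "(g * b) $$ (n,j) = 0" if j: "j < p" for j
  proof -
    have "(g * b) $$ (n,j) = (\<Sum>l<Suc n. g $$ (n,l) * b $$ (l,j))"
      by (rule mult_entry[OF g ut_carrier[OF b]], insert that pn, auto)
    also have "\<dots> = 0"
    proof (rule sum.neutral, intro ballI)
      fix l assume l: "l \<in> {..<Suc n}"
      show "g $$ (n,l) * b $$ (l,j) = 0"
      proof (cases "j < l")
        case True then show ?thesis using ut_entry[OF b] l j pn by simp
      next
        case False then show ?thesis using t j unfolding typeP_def by auto
      qed
    qed
    finally show ?thesis .
  qed
  have B: "(b' * h) $$ (j,n) = 0" if j: "p < j" "j \<le> n" for j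
  proof -
    have "(b' * h) $$ (j,n) = (\<Sum>l<Suc n. b' $$ (j,l) * h $$ (l,n))"
      by (rule mult_entry[OF ut_carrier[OF b'] h], insert that, auto)
    also have "\<dots> = 0"
    proof (rule sum.neutral, intro ballI)
      fix l assume l: "l \<in> {..<Suc n}"
      show "b' $$ (j,l) * h $$ (l,n) = 0"
      proof (cases "l < j")
        case True then show ?thesis using ut_entry[OF b'] l j by simp
      next
        case False then show ?thesis using t j l unfolding typeP_def by auto
      qed
    qed
    finally show ?thesis .
  qed
  show ?thesis unfolding typeP_def using pn A B by auto
qed


lemma inv_cancel_sq:
  assumes "inv_pair N a b" "Y \<in> carrier_mat N N"
  shows "a * (b * Y) = Y" "b * (a * Y) = Y" "a * b = 1\<^sub>m N" "b * a = 1\<^sub>m N"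
  using inv_cancel[OF assms] assms unfolding inv_pair_def by auto

definition Mform :: "nat \<Rightarrow> nat \<Rightarrow> complex mat \<Rightarrow> complex mat" where
  "Mform n p g = mat (Suc n) (Suc n) (\<lambda>(i,j). if j = p then (if i = n then 1 else 0) else (if i = n then 0 else g $$ (i,j)))"

lemma Mform_carrier: "Mform n p g \<in> carrier_mat (Suc n) (Suc n)" unfolding Mform_def by simp

lemma Mform_entry: "i < Suc n \<Longrightarrow> j < Suc n \<Longrightarrow> Mform n p g $$ (i,j) =
  (if j = p then (if i = n then 1 else 0) else (if i = n then 0 else g $$ (i,j)))"
  unfolding Mform_def by simp

lemma Mform_row:
  assumes "p \<le> n" "Y \<in> carrier_mat (Suc n) (Suc n)" "l < Suc n"
  shows "(Mform n p g * Y) $$ (n,l) = Y $$ (p,l)"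
proof -
  have "(Mform n p g * Y) $$ (n,l) = (\<Sum>t<Suc n. Mform n p g $$ (n,t) * Y $$ (t,l))"
    by (rule mult_entry[OF Mform_carrier assms(2)], insert assms, auto)
  also have "\<dots> = Mform n p g $$ (n,p) * Y $$ (p,l)"
    by (rule sum_single, insert assms, auto simp: Mform_entry)
  finally show ?thesis using assms by (simp add: Mform_entry)
qed

lemma Mform_col:
  assumes "p \<le> n" "Y \<in> carrier_mat (Suc n) (Suc n)" "l < Suc n"
  shows "(Y * Mform n p g) $$ (l,p) = Y $$ (l,n)"
proof -
  have "(Y * Mform n p g) $$ (l,p) = (\<Sum>t<Suc n. Y $$ (l,t) * Mform n p g $$ (t,p))"
    by (rule mult_entry[OF assms(2) Mform_carrier], insert assms, auto)
  also have "\<dots> = Y $$ (l,n) * Mform n p g $$ (n,p)"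
    by (rule sum_single, insert assms, auto simp: Mform_entry)
  finally show ?thesis using assms by (simp add: Mform_entry)
qed

lemma Mform_b:
  assumes gh: "inv_pair (Suc n) g h" and t: "typeP n p g h"
  shows "h * Mform n p g \<in> upper_tri (Suc n)" "det (h * Mform n p g) \<noteq> 0" "g * (h * Mform n p g) = Mform n p g"
proof -
  let ?N = "Suc n"
  let ?M = "Mform n p g"
  have g: "g \<in> carrier_mat ?N ?N" and h: "h \<in> carrier_mat ?N ?N" and gh1: "g * h = 1\<^sub>m ?N" and hg1: "h * g = 1\<^sub>m ?N"
    using gh unfolding inv_pair_def by auto
  have pn: "p \<le> n" and tg: "\<And>j. j < p \<Longrightarrow> g $$ (n,j) = 0" and th: "\<And>j. p < j \<Longrightarrow> j \<le> n \<Longrightarrow> h $$ (j,n) = 0"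
    using t unfolding typeP_def by auto
  have Mc: "?M \<in> carrier_mat ?N ?N" by (rule Mform_carrier)
  have bentry: "(h * ?M) $$ (l,j) = (if j = p then h $$ (l,n) else (if l = j then 1 else 0) - h $$ (l,n) * g $$ (n,j))"
    if lj: "l < ?N" "j < ?N" for l j
  proof -
    have e1: "(h * ?M) $$ (l,j) = (\<Sum>i<n. h $$ (l,i) * ?M $$ (i,j)) + h $$ (l,n) * ?M $$ (n,j)"
      using mult_entry[OF h Mc lj] by simp
    have e2: "(h * g) $$ (l,j) = (\<Sum>i<n. h $$ (l,i) * g $$ (i,j)) + h $$ (l,n) * g $$ (n,j)"
      using mult_entry[OF h g lj] by simp
    show ?thesis
    proof (cases "j = p")
      case True
      then show ?thesis using e1 lj by (simp add: Mform_entry)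
    next
      case False
      have "(\<Sum>i<n. h $$ (l,i) * ?M $$ (i,j)) = (\<Sum>i<n. h $$ (l,i) * g $$ (i,j))"
        using False lj by (intro sum.cong refl) (simp add: Mform_entry)
      then show ?thesis using e1 e2 False lj hg1 by (simp add: Mform_entry)
    qed
  qed
  show bU: "h * ?M \<in> upper_tri ?N"
  proof (rule ut_I)
    show "h * ?M \<in> carrier_mat ?N ?N" using h Mc by simp
    fix l j assume lj: "l < ?N" "j < ?N" "j < l"
    show "(h * ?M) $$ (l,j) = 0"
    proof (cases "p < l")
      case True then show ?thesis using bentry[of l j] lj th[of l] by simp
    next
      case False then show ?thesis using bentry[of l j] lj tg[of j] by simp
    qed
  qed
  have hp: "h $$ (p,n) \<noteq> 0"
  proof -
    have "(g * h) $$ (n,n) = (\<Sum>l<?N. g $$ (n,l) * h $$ (l,n))" using mult_entry[OF g h] by simp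
    also have "\<dots> = g $$ (n,p) * h $$ (p,n)"
    proof (rule sum_single)
      show "p < ?N" using pn by simp
      fix l assume l: "l < ?N" "l \<noteq> p"
      show "g $$ (n,l) * h $$ (l,n) = 0"
      proof (cases "l < p")
        case True then show ?thesis using tg by simp
      next
        case False then show ?thesis using th[of l] l by simp
      qed
    qed
    finally show ?thesis using gh1 by auto
  qed
  have "det (h * ?M) = (\<Prod>i = 0..<?N. (h * ?M) $$ (i,i))" by (rule ut_det_diag[OF bU])
  also have "\<dots> \<noteq> 0"
  proof -
    have "(h * ?M) $$ (i,i) \<noteq> 0" if "i < ?N" for i
    proof (cases "i = p")
      case True then show ?thesis using bentry[of i i] that hp by simp
    next
      case False
      then have "h $$ (i,n) * g $$ (n,i) = 0" using tg[of i] th[of i] that by (cases "i < p") auto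
      then show ?thesis using bentry[of i i] that False by auto
    qed
    then show ?thesis by (subst prod_zero_iff) auto
  qed
  finally show "det (h * ?M) \<noteq> 0" .
  show "g * (h * ?M) = ?M" using inv_cancel_sq(1)[OF gh Mc] .
qed

lemma Mform_det:
  assumes gh: "inv_pair (Suc n) g h" and t: "typeP n p g h"
  shows "det (Mform n p g) \<noteq> 0"
proof -
  have g: "g \<in> carrier_mat (Suc n) (Suc n)" and h: "h \<in> carrier_mat (Suc n) (Suc n)"
    using gh unfolding inv_pair_def by auto
  have "det (Mform n p g) = det g * det (h * Mform n p g)"
    using Mform_b(3)[OF gh t] det_mult[OF g, of "h * Mform n p g"] h Mform_carrier by simp
  then show ?thesis using Mform_b(2)[OF gh t] inv_pair_det[OF gh] by auto
qed

lemma kappa_block: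
  assumes pn: "p \<le> n" and MX: "inv_pair (Suc n) (Mform n p g1) X"
  shows "block_diag n (Mform n p g2 * X)"
proof -
  let ?N = "Suc n"
  have Xc: "X \<in> carrier_mat ?N ?N" and M1X: "Mform n p g1 * X = 1\<^sub>m ?N" and XM1: "X * Mform n p g1 = 1\<^sub>m ?N"
    using MX unfolding inv_pair_def by auto
  let ?k = "Mform n p g2 * X"
  have kc: "?k \<in> carrier_mat ?N ?N" using Xc Mform_carrier by simp
  have rowk: "?k $$ (n,l) = 0" if "l < n" for l
  proof -
    have "?k $$ (n,l) = X $$ (p,l)" using Mform_row[OF pn Xc] that by simp
    also have "\<dots> = (Mform n p g1 * X) $$ (n,l)" using Mform_row[OF pn Xc] that by simp
    also have "\<dots> = 0" using M1X that by simp
    finally show ?thesis .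
  qed
  have kM: "?k * Mform n p g1 = Mform n p g2"
  proof -
    have "?k * Mform n p g1 = Mform n p g2 * (X * Mform n p g1)"
      using Xc Mform_carrier by (simp add: assoc_mult_mat[of _ ?N ?N _ ?N _ ?N])
    then show ?thesis using XM1 right_mult_one_mat[OF Mform_carrier] by simp
  qed
  have colk: "?k $$ (l,n) = 0" if "l < n" for l
  proof -
    have "?k $$ (l,n) = (?k * Mform n p g1) $$ (l,p)" using Mform_col[OF pn kc] that by simp
    also have "\<dots> = Mform n p g2 $$ (l,p)" using kM by simp
    also have "\<dots> = 0" using that pn by (simp add: Mform_entry)
    finally show ?thesis .
  qed
  show ?thesis unfolding block_diag_def
  proof (intro allI impI)
    fix i j assume ij: "i \<le> n" "j \<le> n" "(i < n) \<noteq> (j < n)"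
    show "?k $$ (i,j) = 0"
    proof (cases "i < n")
      case True then have "j = n" using ij by simp
      then show ?thesis using colk True by simp
    next
      case False then have "i = n" "j < n" using ij by auto
      then show ?thesis using rowk by simp
    qed
  qed
qed


lemma same_orbit:
  assumes gh1: "inv_pair (Suc n) g1 h1" and t1: "typeP n p g1 h1"
    and gh2: "inv_pair (Suc n) g2 h2" and t2: "typeP n p g2 h2"
  shows "conj_set g2 h2 (upper_tri (Suc n)) \<in> K_orbit n (conj_set g1 h1 (upper_tri (Suc n)))"
proof -
  let ?N = "Suc n"
  let ?B = "upper_tri ?N"
  have pn: "p \<le> n" using t1 unfolding typeP_def by auto
  have c1: "g1 \<in> carrier_mat ?N ?N" "h1 \<in> carrier_mat ?N ?N" using gh1 unfolding inv_pair_def by auto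
  have c2: "g2 \<in> carrier_mat ?N ?N" "h2 \<in> carrier_mat ?N ?N" using gh2 unfolding inv_pair_def by auto
  define M1 where "M1 = Mform n p g1"
  define M2 where "M2 = Mform n p g2"
  define b1 where "b1 = h1 * M1"
  define b2 where "b2 = h2 * M2"
  have Mc: "M1 \<in> carrier_mat ?N ?N" "M2 \<in> carrier_mat ?N ?N" unfolding M1_def M2_def by (auto intro: Mform_carrier)
  have b1U: "b1 \<in> ?B" and db1: "det b1 \<noteq> 0" and gb1: "g1 * b1 = M1"
    using Mform_b[OF gh1 t1] unfolding b1_def M1_def by auto
  have b2U: "b2 \<in> ?B" and db2: "det b2 \<noteq> 0" and gb2: "g2 * b2 = M2"
    using Mform_b[OF gh2 t2] unfolding b2_def M2_def by auto
  have bc: "b1 \<in> carrier_mat ?N ?N" "b2 \<in> carrier_mat ?N ?N" using ut_carrier b1U b2U by auto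
  obtain X1 where MX1: "inv_pair ?N M1 X1" using det_nonzero_inv[OF Mc(1)] Mform_det[OF gh1 t1] unfolding M1_def by blast
  obtain X2 where MX2: "inv_pair ?N M2 X2" using det_nonzero_inv[OF Mc(2)] Mform_det[OF gh2 t2] unfolding M2_def by blast
  obtain e1 where be1: "inv_pair ?N b1 e1" using det_nonzero_inv[OF bc(1) db1] by blast
  obtain e2 where be2: "inv_pair ?N b2 e2" using det_nonzero_inv[OF bc(2) db2] by blast
  have Xc: "X1 \<in> carrier_mat ?N ?N" "X2 \<in> carrier_mat ?N ?N" using MX1 MX2 unfolding inv_pair_def by auto
  have ec: "e1 \<in> carrier_mat ?N ?N" "e2 \<in> carrier_mat ?N ?N" using be1 be2 unfolding inv_pair_def by auto
  have e2U: "e2 \<in> ?B" using ut_inv[OF b2U be2] .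
  have e1U: "e1 \<in> ?B" using ut_inv[OF b1U be1] .
  define k where "k = M2 * X1"
  define k' where "k' = M1 * X2"
  have kk: "inv_pair ?N k k'" unfolding k_def k'_def by (rule inv_pair_mult[OF MX2 inv_pair_sym[OF MX1]])
  have kb: "block_diag n k" unfolding k_def M2_def using kappa_block[OF pn MX1[unfolded M1_def]] .
  have k'b: "block_diag n k'" unfolding k'_def M1_def using kappa_block[OF pn MX2[unfolded M2_def]] .
  have kc: "k \<in> carrier_mat ?N ?N" "k' \<in> carrier_mat ?N ?N" using kk unfolding inv_pair_def by auto
  define \<beta> where "\<beta> = b1 * e2"
  define \<beta>' where "\<beta>' = b2 * e1"
  have bb: "inv_pair ?N \<beta> \<beta>'" unfolding \<beta>_def \<beta>'_def by (rule inv_pair_mult[OF be1 inv_pair_sym[OF be2]])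
  have \<beta>U: "\<beta> \<in> ?B" unfolding \<beta>_def using ut_mult[OF b1U e2U] .
  have \<beta>c: "\<beta> \<in> carrier_mat ?N ?N" "\<beta>' \<in> carrier_mat ?N ?N" using bb unfolding inv_pair_def by auto
  have g2eq: "g2 = k * (g1 * \<beta>)"
  proof -
    have "k * (g1 * \<beta>) = M2 * (X1 * ((g1 * b1) * e2))" unfolding k_def \<beta>_def
      using Mc Xc c1 bc ec by (simp add: assoc_mult_mat[of _ ?N ?N _ ?N _ ?N])
    also have "\<dots> = M2 * e2" unfolding gb1 using inv_cancel_sq(2)[OF MX1 ec(2)] by simp
    also have "\<dots> = g2 * (b2 * e2)" unfolding gb2[symmetric] using c2 bc ec by (simp add: assoc_mult_mat[of _ ?N ?N _ ?N _ ?N])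
    also have "\<dots> = g2" using inv_cancel_sq(3)[OF be2 one_carrier_mat] c2 by simp
    finally show ?thesis by simp
  qed
  have h2eq: "h2 = (\<beta>' * h1) * k'"
  proof (rule inv_unique[OF gh2, symmetric])
    show "\<beta>' * h1 * k' \<in> carrier_mat ?N ?N" using \<beta>c c1 kc by simp
    have "g2 * (\<beta>' * h1 * k') = k * (g1 * (\<beta> * (\<beta>' * (h1 * k'))))"
      unfolding g2eq using kc \<beta>c c1 by (simp add: assoc_mult_mat[of _ ?N ?N _ ?N _ ?N])
    also have "\<dots> = k * (g1 * (h1 * k'))" using inv_cancel_sq(1)[OF bb, of "h1 * k'"] c1 kc by simp
    also have "\<dots> = k * k'" using inv_cancel_sq(1)[OF gh1 kc(2)] by simp
    also have "\<dots> = 1\<^sub>m ?N" using inv_cancel_sq(3)[OF kk one_carrier_mat] by simp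
    finally show "g2 * (\<beta>' * h1 * k') = 1\<^sub>m ?N" .
  qed
  have "conj_set g2 h2 ?B = conj_set (k * (g1 * \<beta>)) ((\<beta>' * h1) * k') ?B" using g2eq h2eq by simp
  also have "\<dots> = conj_set k k' (conj_set (g1 * \<beta>) (\<beta>' * h1) ?B)"
    by (rule conj_set_comp[symmetric], insert kc c1 \<beta>c ut_subset, auto)
  also have "conj_set (g1 * \<beta>) (\<beta>' * h1) ?B = conj_set g1 h1 (conj_set \<beta> \<beta>' ?B)"
    by (rule conj_set_comp[symmetric], insert c1 \<beta>c ut_subset, auto)
  also have "conj_set \<beta> \<beta>' ?B = ?B" by (rule conj_set_ut[OF bb \<beta>U])
  finally have eq: "conj_set g2 h2 ?B = conj_set k k' (conj_set g1 h1 ?B)" .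
  show ?thesis unfolding K_orbit_def using eq kk kb k'b by auto
qed

lemma orbit_typeP:
  assumes gh: "inv_pair (Suc n) g h" and t: "typeP n p g h"
    and ss: "inv_pair (Suc n) s s'"
    and mem: "conj_set s s' (upper_tri (Suc n)) \<in> K_orbit n (conj_set g h (upper_tri (Suc n)))"
  shows "typeP n p s s'"
proof -
  let ?N = "Suc n"
  let ?B = "upper_tri ?N"
  from mem obtain k k' where kk: "inv_pair ?N k k'" and kb: "block_diag n k" "block_diag n k'"
    and eq0: "conj_set s s' ?B = conj_set k k' (conj_set g h ?B)"
    unfolding K_orbit_def by auto
  have c: "g \<in> carrier_mat ?N ?N" "h \<in> carrier_mat ?N ?N" using gh unfolding inv_pair_def by auto
  have kc: "k \<in> carrier_mat ?N ?N" "k' \<in> carrier_mat ?N ?N" using kk unfolding inv_pair_def by auto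
  have sc: "s \<in> carrier_mat ?N ?N" "s' \<in> carrier_mat ?N ?N" using ss unfolding inv_pair_def by auto
  define m where "m = k * g"
  define m' where "m' = h * k'"
  have mm: "inv_pair ?N m m'" unfolding m_def m'_def by (rule inv_pair_mult[OF kk gh])
  have mc: "m \<in> carrier_mat ?N ?N" "m' \<in> carrier_mat ?N ?N" using mm unfolding inv_pair_def by auto
  have eq: "conj_set s s' ?B = conj_set m m' ?B" unfolding eq0 m_def m'_def
    by (rule conj_set_comp, insert kc c ut_subset, auto)
  have tm: "typeP n p m m'" unfolding m_def m'_def by (rule typeP_K[OF t kb(1) kc(1) kb(2) kc(2) c])
  have bU: "m' * s \<in> ?B" by (rule borel_eq_ut[OF ss mm eq])
  have b'U: "s' * m \<in> ?B" by (rule borel_eq_ut[OF mm ss eq[symmetric]])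
  have "typeP n p (m * (m' * s)) ((s' * m) * m')" by (rule typeP_B[OF tm bU b'U mc])
  moreover have "m * (m' * s) = s" using inv_cancel_sq(1)[OF mm sc(1)] .
  moreover have "(s' * m) * m' = s'"
    using sc mc inv_cancel_sq(3)[OF mm one_carrier_mat] by (simp add: assoc_mult_mat[of _ ?N ?N _ ?N _ ?N])
  ultimately show ?thesis by simp
qed

lemma typeP_flag_closed:
  assumes gh: "inv_pair (Suc n) g h" and t: "typeP n p g h"
  shows "flag_closed (Suc n) (K_orbit n (conj_set g h (upper_tri (Suc n))))"
  unfolding flag_closed_def
proof (intro allI impI, elim conjE)
  fix s s' g0 h0
  assume st: "\<forall>k. inv_pair (Suc n) (s k) (s' k) \<and> conj_set (s k) (s' k) (upper_tri (Suc n)) \<in> K_orbit n (conj_set g h (upper_tri (Suc n)))"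
    and gh0: "inv_pair (Suc n) g0 h0" and conv: "mat_converges (Suc n) s g0"
  have "\<And>k. inv_pair (Suc n) (s k) (s' k) \<and> typeP n p (s k) (s' k)"
    using st orbit_typeP[OF gh t] by blast
  then have "typeP n p g0 h0" using typeP_closed gh0 conv by blast
  then show "conj_set g0 h0 (upper_tri (Suc n)) \<in> K_orbit n (conj_set g h (upper_tri (Suc n)))"
    by (rule same_orbit[OF gh t gh0])
qed


definition flatm :: "nat \<Rightarrow> complex mat \<Rightarrow> complex vec" where
  "flatm N A = vec (N*N) (\<lambda>t. A $$ (t div N, t mod N))"

lemma flatm_index: "i < N \<Longrightarrow> j < N \<Longrightarrow> flatm N A $ (i*N + j) = A $$ (i,j)"
proof -
  assume ij: "i < N" "j < N"
  have t: "i*N + j < N*N"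
  proof -
    have "i*N + j < i*N + N" using ij by simp
    also have "\<dots> = Suc i * N" by simp
    also have "\<dots> \<le> N * N" using mult_le_mono1[of "Suc i" N N] ij by simp
    finally show ?thesis .
  qed
  have "(i*N + j) div N = i" "(i*N + j) mod N = j" using ij by auto
  then show ?thesis unfolding flatm_def using t by simp
qed

lemma flatm_inj: "inj_on (flatm N) (carrier_mat N N)"
proof (rule inj_onI)
  fix A B assume A: "A \<in> carrier_mat N N" and B: "B \<in> carrier_mat N N" and eq: "flatm N A = flatm N B"
  show "A = B"
  proof (rule eq_matI)
    fix i j assume "i < dim_row B" "j < dim_col B"
    then have ij: "i < N" "j < N" using B by auto
    show "A $$ (i,j) = B $$ (i,j)" using flatm_index[OF ij, of A] flatm_index[OF ij, of B] eq by simp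
  qed (insert A B, auto)
qed

lemma indep_card_bound:
  assumes fin: "finite S" and sub: "S \<subseteq> carrier_mat N N" and li: "mat_lin_indep N S"
  shows "card S \<le> N * N"
proof -
  define W where "W = flatm N ` S"
  have finW: "finite W" unfolding W_def by (rule finite_imageI[OF fin])
  interpret vec_space "TYPE(complex)" "N*N" .
  have injS: "inj_on (flatm N) S" using inj_on_subset[OF flatm_inj sub] .
  have cardW: "card W = card S" unfolding W_def using card_image[OF injS] .
  have Wc: "W \<subseteq> carrier_vec (N*N)" unfolding W_def flatm_def by auto
  have liW: "lin_indpt W"
  proof (rule finite_lin_indpt2[OF finW])
    show "W \<subseteq> carrier_vec (N*N)" using Wc by simp
    fix a assume "True" and lc: "lincomb a W = 0\<^sub>v (N*N)"
    define c where "c M = a (flatm N M)" for M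
    have "\<forall>i<N. \<forall>j<N. (\<Sum>A\<in>S. c A * A $$ (i,j)) = 0"
    proof (intro allI impI)
      fix i j assume ij: "i < N" "j < N"
      have t: "i*N + j < N*N"
      proof -
        have "i*N + j < i*N + N" using ij by simp
        also have "\<dots> = Suc i * N" by simp
        also have "\<dots> \<le> N * N" using mult_le_mono1[of "Suc i" N N] ij by simp
        finally show ?thesis .
      qed
      have "(\<Sum>A\<in>S. c A * A $$ (i,j)) = (\<Sum>A\<in>S. a (flatm N A) * flatm N A $ (i*N + j))"
        unfolding c_def using flatm_index[OF ij] by simp
      also have "\<dots> = (\<Sum>x\<in>W. a x * x $ (i*N + j))"
        unfolding W_def by (rule sum.reindex[OF injS, symmetric, unfolded comp_def])
      also have "\<dots> = lincomb a W $ (i*N + j)" by (rule lincomb_index[OF t Wc, symmetric])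
      also have "\<dots> = 0" using lc t by simp
      finally show "(\<Sum>A\<in>S. c A * A $$ (i,j)) = 0" .
    qed
    then have "\<forall>A\<in>S. c A = 0" using li unfolding mat_lin_indep_def by blast
    then show "\<forall>v\<in>W. a v = 0" unfolding W_def c_def by simp
  qed
  have "card W \<le> dim" using li_le_dim(2)[OF fin_dim _ liW] Wc by simp
  then show ?thesis using cardW dim_is_n by simp
qed


definition indep_fam :: "nat \<Rightarrow> nat \<Rightarrow> (nat \<Rightarrow> complex mat) \<Rightarrow> bool" where
  "indep_fam N L F \<longleftrightarrow> (\<forall>c. (\<forall>i<N. \<forall>j<N. (\<Sum>l<L. c l * F l $$ (i,j)) = 0) \<longrightarrow> (\<forall>l<L. c l = 0))"

lemma sum_split_add: "(\<Sum>l<(a::nat)+b. f l) = (\<Sum>l<a. f l) + (\<Sum>t<b. f (a+t))"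
  by (induct b) (auto simp: ac_simps)

lemma delta_sum:
  assumes "a < (L::nat)"
  shows "(\<Sum>l<L. (if l = a then 1 else 0) * (X l :: complex)) = X a"
proof -
  have "(\<Sum>l<L. (if l = a then 1 else 0) * X l) = (if a = a then 1 else 0) * X a"
    by (rule sum_single[OF assms]) simp
  then show ?thesis by simp
qed

lemma two_point_sum:
  assumes "a < (L::nat)" "b < L"
  shows "(\<Sum>l<L. ((if l = a then 1 else 0) - (if l = b then 1 else 0)) * (X l :: complex)) = X a - X b"
proof -
  have "(\<Sum>l<L. ((if l = a then 1 else 0) - (if l = b then 1 else 0)) * X l) =
        (\<Sum>l<L. (if l = a then 1 else 0) * X l - (if l = b then 1 else 0) * X l)"
    by (simp only: left_diff_distrib)
  also have "\<dots> = (\<Sum>l<L. (if l = a then 1 else 0) * X l) - (\<Sum>l<L. (if l = b then 1 else 0) * X l)"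
    by (rule sum_subtractf)
  also have "\<dots> = X a - X b" by (simp only: delta_sum[OF assms(1)] delta_sum[OF assms(2)])
  finally show ?thesis .
qed

lemma fam_inj:
  assumes ind: "indep_fam N L F"
  shows "inj_on F {..<L}"
proof (rule inj_onI, rule ccontr)
  fix a b assume a: "a \<in> {..<L}" and b: "b \<in> {..<L}" and eq: "F a = F b" and ne: "a \<noteq> b"
  define c where "c l = ((if l = a then 1 else 0) - (if l = b then 1 else (0::complex)))" for l
  have "\<forall>i<N. \<forall>j<N. (\<Sum>l<L. c l * F l $$ (i,j)) = 0"
  proof (intro allI impI)
    fix i j
    have "(\<Sum>l<L. c l * F l $$ (i,j)) = F a $$ (i,j) - F b $$ (i,j)"
      unfolding c_def by (rule two_point_sum, insert a b, auto)
    then show "(\<Sum>l<L. c l * F l $$ (i,j)) = 0" unfolding eq by simp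
  qed
  then have "\<forall>l<L. c l = 0" using ind unfolding indep_fam_def by blast
  then have "c a = 0" using a by blast
  then show False unfolding c_def using ne by simp
qed

lemma fam_to_set:
  assumes ind: "indep_fam N L F" and cen: "\<And>l. l < L \<Longrightarrow> F l \<in> centralizer N y"
  shows "\<exists>S. finite S \<and> S \<subseteq> centralizer N y \<and> mat_lin_indep N S \<and> card S = L"
proof -
  have inj: "inj_on F {..<L}" by (rule fam_inj[OF ind])
  define S where "S = F ` {..<L}"
  have li: "mat_lin_indep N S"
    unfolding mat_lin_indep_def
  proof (intro allI impI ballI)
    fix c :: "complex mat \<Rightarrow> complex" and A
    assume h: "\<forall>i<N. \<forall>j<N. (\<Sum>A\<in>S. c A * A $$ (i,j)) = 0" and A: "A \<in> S"
    define c' where "c' l = c (F l)" for l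
    have "\<forall>i<N. \<forall>j<N. (\<Sum>l<L. c' l * F l $$ (i,j)) = 0"
      unfolding c'_def
    proof (intro allI impI)
      fix i j assume "i < N" "j < N"
      then have "(\<Sum>A\<in>S. c A * A $$ (i,j)) = 0" using h by blast
      moreover have "(\<Sum>A\<in>S. c A * A $$ (i,j)) = (\<Sum>l<L. c (F l) * F l $$ (i,j))"
        unfolding S_def by (subst sum.reindex[OF inj]) (simp add: comp_def)
      ultimately show "(\<Sum>l<L. c (F l) * F l $$ (i,j)) = 0" by simp
    qed
    then have "\<forall>l<L. c' l = 0" using ind unfolding indep_fam_def by blast
    then have all: "\<forall>l<L. c (F l) = 0" unfolding c'_def .
    from A obtain l where "l < L" "A = F l" unfolding S_def by blast
    then show "c A = 0" using all by blast
  qed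
  have card: "card S = L" unfolding S_def using card_image[OF inj] by simp
  have sub: "S \<subseteq> centralizer N y" unfolding S_def using cen by auto
  have fin: "finite S" unfolding S_def by simp
  show ?thesis by (rule exI[of _ S], intro conjI fin sub li card)
qed

lemma fam_transfer:
  assumes PQ: "inv_pair N P Q" and Jc: "J \<in> carrier_mat N N"
    and Fc: "\<And>l. l < L \<Longrightarrow> F l \<in> carrier_mat N N"
    and Fcomm: "\<And>l. l < L \<Longrightarrow> F l * J = J * F l"
    and ind: "indep_fam N L F"
  shows "indep_fam N L (\<lambda>l. P * F l * Q)" "\<And>l. l < L \<Longrightarrow> P * F l * Q \<in> centralizer N (P * J * Q)"
proof -
  have Pc: "P \<in> carrier_mat N N" and Qc: "Q \<in> carrier_mat N N" and QP: "Q * P = 1\<^sub>m N"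
    using PQ unfolding inv_pair_def by auto
  show "P * F l * Q \<in> centralizer N (P * J * Q)" if l: "l < L" for l
  proof -
    have "P * F l * Q * (P * J * Q) = P * (F l * ((Q * P) * (J * Q)))"
      using Pc Qc Jc Fc[OF l] by (simp add: assoc_mult_mat[of _ N N _ N _ N])
    also have "\<dots> = P * ((F l * J) * Q)" using QP Jc Qc Fc[OF l] by (simp add: assoc_mult_mat[of _ N N _ N _ N])
    also have "\<dots> = P * ((J * F l) * Q)" using Fcomm[OF l] by simp
    also have "\<dots> = P * (J * ((Q * P) * (F l * Q)))"
      using QP Jc Qc Fc[OF l] by (simp add: assoc_mult_mat[of _ N N _ N _ N])
    also have "\<dots> = P * J * Q * (P * F l * Q)"
      using Pc Qc Jc Fc[OF l] by (simp add: assoc_mult_mat[of _ N N _ N _ N])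
    finally show ?thesis unfolding centralizer_def using Pc Qc Fc[OF l] by simp
  qed
  show "indep_fam N L (\<lambda>l. P * F l * Q)"
    unfolding indep_fam_def
  proof (intro allI impI)
    fix c :: "nat \<Rightarrow> complex" and l
    assume h: "\<forall>i<N. \<forall>j<N. (\<Sum>l<L. c l * (P * F l * Q) $$ (i,j)) = 0" and l: "l < L"
    define Z where "Z = mat N N (\<lambda>(i,j). \<Sum>l<L. c l * F l $$ (i,j))"
    have Zc: "Z \<in> carrier_mat N N" unfolding Z_def by simp
    have PZQ: "P * Z * Q = 0\<^sub>m N N"
    proof (rule eq_matI)
      fix i j assume "i < dim_row (0\<^sub>m N N)" "j < dim_col (0\<^sub>m N N)"
      then have ij: "i < N" "j < N" by auto
      have "(P * Z * Q) $$ (i,j) = (\<Sum>a<N. P $$ (i,a) * (\<Sum>b<N. Z $$ (a,b) * Q $$ (b,j)))"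
        by (rule conj_entry[OF Pc Zc Qc ij])
      also have "\<dots> = (\<Sum>a<N. P $$ (i,a) * (\<Sum>b<N. (\<Sum>l<L. c l * F l $$ (a,b)) * Q $$ (b,j)))"
        unfolding Z_def by (intro sum.cong refl) simp
      also have "\<dots> = (\<Sum>a<N. \<Sum>b<N. \<Sum>l<L. c l * (P $$ (i,a) * (F l $$ (a,b) * Q $$ (b,j))))"
        by (simp add: sum_distrib_left sum_distrib_right mult.assoc mult.left_commute)
      also have "\<dots> = (\<Sum>a<N. \<Sum>l<L. \<Sum>b<N. c l * (P $$ (i,a) * (F l $$ (a,b) * Q $$ (b,j))))"
        by (rule sum.cong[OF refl], rule sum.swap)
      also have "\<dots> = (\<Sum>l<L. \<Sum>a<N. \<Sum>b<N. c l * (P $$ (i,a) * (F l $$ (a,b) * Q $$ (b,j))))"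
        by (rule sum.swap)
      also have "\<dots> = (\<Sum>l<L. c l * (P * F l * Q) $$ (i,j))"
      proof (intro sum.cong refl)
        fix l assume l: "l \<in> {..<L}"
        then have l': "l < L" by simp
        show "(\<Sum>a<N. \<Sum>b<N. c l * (P $$ (i,a) * (F l $$ (a,b) * Q $$ (b,j)))) = c l * (P * F l * Q) $$ (i,j)"
          unfolding conj_entry[OF Pc Fc[OF l'] Qc ij] by (simp add: sum_distrib_left)
      qed
      also have "\<dots> = 0" using h ij by simp
      finally show "(P * Z * Q) $$ (i,j) = 0\<^sub>m N N $$ (i,j)" using ij by simp
    qed (insert Pc Qc, auto)
    have "Z = Q * (P * Z * Q) * P"
    proof -
      have "Q * (P * Z * Q) * P = (Q * P) * Z * (Q * P)"
        using Pc Qc Zc by (simp add: assoc_mult_mat[of _ N N _ N _ N])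
      then show ?thesis using QP Zc by simp
    qed
    then have Z0: "Z = 0\<^sub>m N N" unfolding PZQ using Pc Qc by simp
    have "\<forall>i<N. \<forall>j<N. (\<Sum>l<L. c l * F l $$ (i,j)) = 0"
    proof (intro allI impI)
      fix i j assume "i < N" "j < N"
      then have "Z $$ (i,j) = 0" using Z0 by simp
      then show "(\<Sum>l<L. c l * F l $$ (i,j)) = 0" unfolding Z_def using \<open>i<N\<close> \<open>j<N\<close> by simp
    qed
    then show "c l = 0" using ind l unfolding indep_fam_def by blast
  qed
qed

lemma four_diag_comm:
  assumes "A \<in> carrier_mat k k" "A' \<in> carrier_mat k k" "D \<in> carrier_mat m m" "D' \<in> carrier_mat m m"
    "A * A' = A' * A" "D * D' = D' * D"
  shows "four_block_mat A (0\<^sub>m k m) (0\<^sub>m m k) D * four_block_mat A' (0\<^sub>m k m) (0\<^sub>m m k) D' =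
         four_block_mat A' (0\<^sub>m k m) (0\<^sub>m m k) D' * four_block_mat A (0\<^sub>m k m) (0\<^sub>m m k) D"
  using assms by (simp add: mult_four_block_mat[OF assms(1) zero_carrier_mat zero_carrier_mat assms(3) assms(2) zero_carrier_mat zero_carrier_mat assms(4)]
     mult_four_block_mat[OF assms(2) zero_carrier_mat zero_carrier_mat assms(4) assms(1) zero_carrier_mat zero_carrier_mat assms(3)])

lemma jb_comm:
  fixes a :: complex
  shows "jordan_block k 0 ^\<^sub>m l * jordan_block k a = jordan_block k a * jordan_block k 0 ^\<^sub>m l"
proof -
  let ?J = "jordan_block k (0::complex)"
  have Jc: "?J \<in> carrier_mat k k" by simp
  have Xc: "?J ^\<^sub>m l \<in> carrier_mat k k" by simp
  have eq: "jordan_block k a = ?J + a \<cdot>\<^sub>m 1\<^sub>m k" by (rule eq_matI) auto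
  have c: "?J ^\<^sub>m l * ?J = ?J * ?J ^\<^sub>m l" using pow_Suc_left[OF Jc, of l] by simp
  have "?J ^\<^sub>m l * (?J + a \<cdot>\<^sub>m 1\<^sub>m k) = ?J ^\<^sub>m l * ?J + ?J ^\<^sub>m l * (a \<cdot>\<^sub>m 1\<^sub>m k)"
    by (rule mult_add_distrib_mat[OF Xc Jc], simp)
  also have "?J ^\<^sub>m l * (a \<cdot>\<^sub>m 1\<^sub>m k) = a \<cdot>\<^sub>m ?J ^\<^sub>m l"
    using mult_smult_distrib[OF Xc, of "1\<^sub>m k" k a] Xc by simp
  also have "?J ^\<^sub>m l * ?J + a \<cdot>\<^sub>m ?J ^\<^sub>m l = ?J * ?J ^\<^sub>m l + (a \<cdot>\<^sub>m 1\<^sub>m k) * ?J ^\<^sub>m l"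
    using c mult_smult_assoc_mat[of "1\<^sub>m k" k k "?J ^\<^sub>m l" k a] Xc by simp
  also have "\<dots> = (?J + a \<cdot>\<^sub>m 1\<^sub>m k) * ?J ^\<^sub>m l"
    by (rule add_mult_distrib_mat[symmetric, OF Jc _ Xc], simp)
  finally show ?thesis unfolding eq .
qed


lemma four_entry_tl: "A \<in> carrier_mat k k \<Longrightarrow> D \<in> carrier_mat m m \<Longrightarrow> i < k \<Longrightarrow> j < k \<Longrightarrow>
  four_block_mat A B C D $$ (i,j) = A $$ (i,j)" by simp
lemma four_entry_tr: "A \<in> carrier_mat k k \<Longrightarrow> D \<in> carrier_mat m m \<Longrightarrow> i < k \<Longrightarrow> j < m \<Longrightarrow>
  four_block_mat A B C D $$ (i,k+j) = B $$ (i,j)" by simp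
lemma four_entry_br: "A \<in> carrier_mat k k \<Longrightarrow> D \<in> carrier_mat m m \<Longrightarrow> i < m \<Longrightarrow> j < m \<Longrightarrow>
  four_block_mat A B C D $$ (k+i,k+j) = D $$ (i,j)" by simp

lemma fam_cons:
  fixes a :: complex
  assumes JRc: "JR \<in> carrier_mat m m"
    and Gc0: "\<forall>t<m. G t \<in> carrier_mat m m"
    and Gcomm0: "\<forall>t<m. G t * JR = JR * G t"
    and Gind: "indep_fam m m G"
  shows "\<exists>F. indep_fam (k+m) (k+m) F \<and> (\<forall>l<k+m. F l \<in> carrier_mat (k+m) (k+m) \<and>
     F l * four_block_mat (jordan_block k a) (0\<^sub>m k m) (0\<^sub>m m k) JR = four_block_mat (jordan_block k a) (0\<^sub>m k m) (0\<^sub>m m k) JR * F l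
     \<and> (\<forall>i<k. \<forall>j<m. F l $$ (i, k+j) = 0))"
proof -
  have Gc: "\<And>t. t < m \<Longrightarrow> G t \<in> carrier_mat m m" using Gc0 by simp
  have Gcomm: "\<And>t. t < m \<Longrightarrow> G t * JR = JR * G t" using Gcomm0 by simp
  let ?Jz = "jordan_block k (0::complex)"
  let ?JB = "jordan_block k a"
  define F where "F l = (if l < k then four_block_mat (?Jz ^\<^sub>m l) (0\<^sub>m k m) (0\<^sub>m m k) (0\<^sub>m m m)
     else four_block_mat (0\<^sub>m k k) (0\<^sub>m k m) (0\<^sub>m m k) (G (l - k)))" for l
  have Fc: "F l \<in> carrier_mat (k+m) (k+m)" if "l < k + m" for l
    unfolding F_def using Gc[of "l - k"] that by auto
  have Fcomm: "F l * four_block_mat ?JB (0\<^sub>m k m) (0\<^sub>m m k) JR = four_block_mat ?JB (0\<^sub>m k m) (0\<^sub>m m k) JR * F l"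
    if l: "l < k + m" for l
  proof (cases "l < k")
    case True
    then show ?thesis unfolding F_def using four_diag_comm[of "?Jz ^\<^sub>m l" k ?JB "0\<^sub>m m m" m JR] jb_comm[of k l a] JRc
      by simp
  next
    case False
    then have t: "l - k < m" using l by simp
    show ?thesis unfolding F_def using False four_diag_comm[of "0\<^sub>m k k" k ?JB "G (l - k)" m JR] Gc[OF t] Gcomm[OF t] JRc
      by simp
  qed
  have Ftr: "F l $$ (i, k+j) = 0" if "l < k + m" "i < k" "j < m" for l i j
  proof (cases "l < k")
    case True then show ?thesis unfolding F_def using that by simp
  next
    case False
    then have "G (l - k) \<in> carrier_mat m m" using Gc that by simp
    then show ?thesis unfolding F_def using that False by simp
  qed
  have Jzc: "?Jz ^\<^sub>m l \<in> carrier_mat k k" for l by simp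
  have FA: "F l $$ (i,j) = (?Jz ^\<^sub>m l) $$ (i,j)" if "l < k" "i < k" "j < k" for l i j
    unfolding F_def using that four_entry_tl[OF Jzc zero_carrier_mat] by simp
  have FB: "F l $$ (k+i,k+j) = 0" if "l < k" "i < m" "j < m" for l i j
    unfolding F_def using that four_entry_br[OF Jzc zero_carrier_mat] by simp
  have FC: "F (k+t) $$ (i,j) = 0" if "t < m" "i < k" "j < k" for t i j
    unfolding F_def using that four_entry_tl[OF zero_carrier_mat Gc[OF that(1)]] by simp
  have FD: "F (k+t) $$ (k+i,k+j) = G t $$ (i,j)" if "t < m" "i < m" "j < m" for t i j
    unfolding F_def using that four_entry_br[OF zero_carrier_mat Gc[OF that(1)]] by simp
  have Jz0: "(?Jz ^\<^sub>m l) $$ (0,j) = (if l = j then 1 else 0)" if "j < k" for l j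
    unfolding jordan_block_zero_pow using that by auto
  have Find: "indep_fam (k+m) (k+m) F"
    unfolding indep_fam_def
  proof (intro allI impI)
    fix c :: "nat \<Rightarrow> complex" and l
    assume h: "\<forall>i<k+m. \<forall>j<k+m. (\<Sum>l<k+m. c l * F l $$ (i,j)) = 0" and l: "l < k + m"
    have split: "(\<Sum>l<k+m. c l * F l $$ (i,j)) = (\<Sum>l<k. c l * F l $$ (i,j)) + (\<Sum>t<m. c (k+t) * F (k+t) $$ (i,j))" for i j
      by (rule sum_split_add)
    have A: "c j = 0" if j: "j < k" for j
    proof -
      have "0 = (\<Sum>l<k+m. c l * F l $$ (0,j))" using h j by simp
      also have "\<dots> = (\<Sum>l<k. c l * F l $$ (0,j)) + (\<Sum>t<m. c (k+t) * F (k+t) $$ (0,j))" by (rule split)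
      also have "(\<Sum>t<m. c (k+t) * F (k+t) $$ (0,j)) = 0"
        by (rule sum.neutral) (use FC j in simp)
      also have "(\<Sum>l<k. c l * F l $$ (0,j)) = (\<Sum>l<k. (if l = j then 1 else 0) * c l)"
        by (rule sum.cong[OF refl]) (use FA Jz0 j in simp)
      also have "\<dots> = c j" using delta_sum[OF j] by simp
      finally show ?thesis by simp
    qed
    have B: "c (k+t) = 0" if t: "t < m" for t
    proof -
      define c' where "c' t = c (k+t)" for t
      have "\<forall>i<m. \<forall>j<m. (\<Sum>t<m. c' t * G t $$ (i,j)) = 0"
        unfolding c'_def
      proof (intro allI impI)
        fix i j assume ij: "i < m" "j < m"
        have "0 = (\<Sum>l<k+m. c l * F l $$ (k+i,k+j))" using h ij by simp
        also have "\<dots> = (\<Sum>l<k. c l * F l $$ (k+i,k+j)) + (\<Sum>t<m. c (k+t) * F (k+t) $$ (k+i,k+j))" by (rule split)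
        also have "(\<Sum>l<k. c l * F l $$ (k+i,k+j)) = 0"
          by (rule sum.neutral) (use FB ij in simp)
        also have "(\<Sum>t<m. c (k+t) * F (k+t) $$ (k+i,k+j)) = (\<Sum>t<m. c (k+t) * G t $$ (i,j))"
          by (rule sum.cong[OF refl]) (use FD ij in simp)
        finally show "(\<Sum>t<m. c (k+t) * G t $$ (i,j)) = 0" by simp
      qed
      then have "\<forall>t<m. c' t = 0" using Gind unfolding indep_fam_def by blast
      then show ?thesis using t unfolding c'_def by blast
    qed
    show "c l = 0"
    proof (cases "l < k")
      case True then show ?thesis using A by simp
    next
      case False then have "l = k + (l - k)" "l - k < m" using l by auto
      then show ?thesis using B by metis
    qed
  qed
  show ?thesis
  proof (rule exI[of _ F], intro conjI allI impI Find)
    fix l assume "l < k + m"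
    then show "F l \<in> carrier_mat (k+m) (k+m)"
      "F l * four_block_mat ?JB (0\<^sub>m k m) (0\<^sub>m m k) JR = four_block_mat ?JB (0\<^sub>m k m) (0\<^sub>m m k) JR * F l"
      using Fc Fcomm by auto
    fix i j assume "i < k" "j < m"
    then show "F l $$ (i, k+j) = 0" using Ftr \<open>l < k + m\<close> by simp
  qed
qed

lemma JM:
  "\<exists>F. indep_fam (sum_list (map fst n_as)) (sum_list (map fst n_as)) F \<and>
     (\<forall>l<sum_list (map fst n_as). F l \<in> carrier_mat (sum_list (map fst n_as)) (sum_list (map fst n_as)) \<and>
        F l * jordan_matrix n_as = jordan_matrix n_as * (F l :: complex mat))"
proof (induct n_as)
  case Nil
  show ?case unfolding indep_fam_def by simp
next
  case (Cons ka R)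
  obtain k a where ka: "ka = (k,a)" by fastforce
  let ?m = "sum_list (map fst R)"
  from Cons obtain G where Gind: "indep_fam ?m ?m G"
    and G: "\<forall>t<?m. G t \<in> carrier_mat ?m ?m \<and> G t * jordan_matrix R = jordan_matrix R * G t" by blast
  have JRc: "jordan_matrix R \<in> carrier_mat ?m ?m" by simp
  have Gc: "\<forall>t<?m. G t \<in> carrier_mat ?m ?m" using G by simp
  have Gcomm: "\<forall>t<?m. G t * jordan_matrix R = jordan_matrix R * G t" using G by simp
  obtain F where F1: "indep_fam (k + ?m) (k + ?m) F" and F2: "\<forall>l<k+?m. F l \<in> carrier_mat (k+?m) (k+?m) \<and>
     F l * four_block_mat (jordan_block k a) (0\<^sub>m k ?m) (0\<^sub>m ?m k) (jordan_matrix R) =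
     four_block_mat (jordan_block k a) (0\<^sub>m k ?m) (0\<^sub>m ?m k) (jordan_matrix R) * F l
     \<and> (\<forall>i<k. \<forall>j<?m. F l $$ (i, k+j) = 0)"
    using fam_cons[OF JRc Gc Gcomm Gind, of k a] by (elim exE conjE) (rule that, assumption+)
  show ?case
  proof (rule exI[of _ F])
    show "indep_fam (sum_list (map fst (ka # R))) (sum_list (map fst (ka # R))) F \<and>
      (\<forall>l<sum_list (map fst (ka # R)). F l \<in> carrier_mat (sum_list (map fst (ka # R))) (sum_list (map fst (ka # R))) \<and>
        F l * jordan_matrix (ka # R) = jordan_matrix (ka # R) * F l)"
      unfolding ka jordan_matrix_Cons using F1 F2 by simp
  qed
qed


lemma four_pow:
  assumes A: "A \<in> carrier_mat k k" and D: "D \<in> carrier_mat m m"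
  shows "four_block_mat A (0\<^sub>m k m) (0\<^sub>m m k) D ^\<^sub>m e = four_block_mat (A ^\<^sub>m e) (0\<^sub>m k m) (0\<^sub>m m k) (D ^\<^sub>m e)"
proof (induct e)
  case 0
  show ?case using A D by (intro eq_matI) auto
next
  case (Suc e)
  have "four_block_mat A (0\<^sub>m k m) (0\<^sub>m m k) D ^\<^sub>m Suc e =
    four_block_mat (A ^\<^sub>m e) (0\<^sub>m k m) (0\<^sub>m m k) (D ^\<^sub>m e) * four_block_mat A (0\<^sub>m k m) (0\<^sub>m m k) D"
    using Suc by simp
  also have "\<dots> = four_block_mat (A ^\<^sub>m e * A + 0\<^sub>m k m * 0\<^sub>m m k) (A ^\<^sub>m e * 0\<^sub>m k m + 0\<^sub>m k m * D)
      (0\<^sub>m m k * A + D ^\<^sub>m e * 0\<^sub>m m k) (0\<^sub>m m k * 0\<^sub>m k m + D ^\<^sub>m e * D)"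
    by (rule mult_four_block_mat[OF pow_carrier_mat[OF A] zero_carrier_mat zero_carrier_mat pow_carrier_mat[OF D]
          A zero_carrier_mat zero_carrier_mat D])
  also have "\<dots> = four_block_mat (A ^\<^sub>m Suc e) (0\<^sub>m k m) (0\<^sub>m m k) (D ^\<^sub>m Suc e)"
    using A D by simp
  finally show ?case .
qed

lemma det_pow: assumes "A \<in> carrier_mat n n" shows "det (A ^\<^sub>m e) = det A ^ e"
proof (induct e)
  case 0 then show ?case using assms by simp
next
  case (Suc e) then show ?case using det_mult[OF pow_carrier_mat[OF assms] assms] by simp
qed

lemma subspace_dim_ge:
  assumes S: "finite S" "S \<subseteq> centralizer N y" "mat_lin_indep N S" "card S = L"
  shows "L \<le> subspace_dim N (centralizer N y)"
  unfolding subspace_dim_def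
proof (rule Greatest_le_nat[where b = "N * N"])
  show "\<exists>S. finite S \<and> S \<subseteq> centralizer N y \<and> mat_lin_indep N S \<and> card S = L" using S by blast
  fix d assume ex: "\<exists>S. finite S \<and> S \<subseteq> centralizer N y \<and> mat_lin_indep N S \<and> card S = d"
  show "d \<le> N * N"
  proof -
    from ex obtain S' where "finite S'" "S' \<subseteq> centralizer N y" "mat_lin_indep N S'" "card S' = d" by blast
    moreover have "S' \<subseteq> carrier_mat N N" using \<open>S' \<subseteq> centralizer N y\<close> unfolding centralizer_def by auto
    ultimately show "d \<le> N * N" using indep_card_bound[of S' N] by simp
  qed
qed


lemma nonreg:
  assumes y: "y \<in> carrier_mat (Suc n) (Suc n)" and nil: "y ^\<^sub>m K = 0\<^sub>m (Suc n) (Suc n)"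
    and z: "y ^\<^sub>m n = 0\<^sub>m (Suc n) (Suc n)"
  shows "\<not> regular_mat (Suc n) y"
proof
  assume reg: "regular_mat (Suc n) y"
  obtain as where "char_poly y = (\<Prod>a\<leftarrow>as. [:- a, 1:])" using char_poly_factorized[OF y] by blast
  then obtain n_as where jnf: "jordan_nf y n_as" using jordan_nf_exists[OF y] by blast
  have nz: "0 \<notin> fst ` set n_as" and sim: "similar_mat y (jordan_matrix n_as)" using jnf unfolding jordan_nf_def by auto
  define J where "J = jordan_matrix n_as"
  from similar_matD[OF sim] obtain N' P Q where PQ: "{y, J, P, Q} \<subseteq> carrier_mat N' N'"
    "P * Q = 1\<^sub>m N'" "Q * P = 1\<^sub>m N'" "y = P * J * Q" unfolding J_def by blast
  have N': "N' = Suc n" using PQ(1) y by auto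
  have Jc: "J \<in> carrier_mat (Suc n) (Suc n)" and Pc: "P \<in> carrier_mat (Suc n) (Suc n)"
    and Qc: "Q \<in> carrier_mat (Suc n) (Suc n)" using PQ(1) N' by auto
  have PQi: "inv_pair (Suc n) P Q" unfolding inv_pair_def using Pc Qc PQ N' by auto
  have QPi: "inv_pair (Suc n) Q P" using inv_pair_sym[OF PQi] .
  have Jpow: "J ^\<^sub>m e = Q * y ^\<^sub>m e * P" for e
  proof -
    have "y ^\<^sub>m e = P * J ^\<^sub>m e * Q" unfolding PQ(4) by (rule pow_conj[OF PQi Jc])
    then have "Q * y ^\<^sub>m e * P = Q * (P * (J ^\<^sub>m e * (Q * P)))"
      using Pc Qc Jc by (simp add: assoc_mult_mat[of _ "Suc n" "Suc n" _ "Suc n" _ "Suc n"])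
    also have "\<dots> = J ^\<^sub>m e" using inv_cancel_sq[OF QPi, of "J ^\<^sub>m e"] Jc PQ(3) N' by simp
    finally show ?thesis by simp
  qed
  have JK: "J ^\<^sub>m K = 0\<^sub>m (Suc n) (Suc n)" unfolding Jpow nil using Pc Qc by simp
  have Jn: "J ^\<^sub>m n = 0\<^sub>m (Suc n) (Suc n)" unfolding Jpow z using Pc Qc by simp
  have sumM: "sum_list (map fst n_as) = Suc n" using jordan_matrix_dim(1)[of n_as] Jc unfolding J_def carrier_mat_def by simp
  obtain k a R where nas: "n_as = (k,a) # R"
  proof (cases n_as)
    case Nil then show ?thesis using sumM by simp
  next
    case (Cons ka R) then show ?thesis using that by (cases ka) auto
  qed
  have k0: "k \<noteq> 0" using nz nas by force
  show False
  proof (cases R)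
    case Nil
    have Jb: "J = jordan_block k a" unfolding J_def nas Nil jordan_matrix_def by (simp del: diag_block_mat.simps)
    have kn: "k = Suc n" using sumM nas Nil by simp
    have "(J ^\<^sub>m K) $$ (0,0) = a ^ K" unfolding Jb jordan_block_pow using k0 by simp
    then have "a ^ K = 0" using JK by simp
    then have a0: "a = 0" by simp
    have "(J ^\<^sub>m n) $$ (0,n) = 1" unfolding Jb a0 jordan_block_zero_pow using kn by simp
    then show False using Jn by simp
  next
    case (Cons r rs)
    define m where "m = sum_list (map fst R)"
    have m0: "m > 0"
    proof -
      have "fst r \<noteq> 0" using nz nas Cons by force
      then show ?thesis unfolding m_def Cons by simp
    qed
    have km: "k + m = Suc n" using sumM nas unfolding m_def by simp
    define JB where "JB = jordan_block k a"
    define JR where "JR = jordan_matrix R"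
    have JBc: "JB \<in> carrier_mat k k" unfolding JB_def by simp
    have JRc: "JR \<in> carrier_mat m m" unfolding JR_def m_def by simp
    have Jeq: "J = four_block_mat JB (0\<^sub>m k m) (0\<^sub>m m k) JR"
      unfolding J_def nas jordan_matrix_Cons JB_def JR_def m_def ..
    have JK': "four_block_mat (JB ^\<^sub>m K) (0\<^sub>m k m) (0\<^sub>m m k) (JR ^\<^sub>m K) = 0\<^sub>m (k+m) (k+m)"
      using JK unfolding Jeq four_pow[OF JBc JRc] km .
    have "(JB ^\<^sub>m K) $$ (0,0) = a ^ K" unfolding JB_def jordan_block_pow using k0 by simp
    moreover have "(JB ^\<^sub>m K) $$ (0,0) = 0"
      using arg_cong[OF JK', of "\<lambda>M. M $$ (0,0)"] four_entry_tl[OF pow_carrier_mat[OF JBc] pow_carrier_mat[OF JRc], of 0 0 K]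
        k0 by simp
    ultimately have a0: "a = 0" by simp
    have JRK: "JR ^\<^sub>m K = 0\<^sub>m m m"
    proof (rule eq_matI)
      fix i j assume "i < dim_row (0\<^sub>m m m)" "j < dim_col (0\<^sub>m m m)"
      then have ij: "i < m" "j < m" by auto
      have "(JR ^\<^sub>m K) $$ (i,j) = four_block_mat (JB ^\<^sub>m K) (0\<^sub>m k m) (0\<^sub>m m k) (JR ^\<^sub>m K) $$ (k+i,k+j)"
        using four_entry_br[OF pow_carrier_mat[OF JBc] pow_carrier_mat[OF JRc] ij] by simp
      also have "\<dots> = 0" unfolding JK' using ij by simp
      finally show "(JR ^\<^sub>m K) $$ (i,j) = 0\<^sub>m m m $$ (i,j)" using ij by simp
    qed (use JRc in auto)
    have "det JR ^ K = 0" using det_pow[OF JRc, of K] JRK m0 by simp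
    then have dJR: "det JR = 0" by simp
    have "det (transpose_mat JR) = 0" using det_transpose[OF JRc] dJR by simp
    then obtain v where v: "v \<in> carrier_vec m" "v \<noteq> 0\<^sub>v m" "transpose_mat JR *\<^sub>v v = 0\<^sub>v m"
      using det_0_iff_vec_prod_zero[of "transpose_mat JR" m] JRc by auto
    obtain j0 where j0: "j0 < m" "v $ j0 \<noteq> 0"
    proof (rule ccontr)
      assume "\<not> thesis"
      then have "\<forall>j<m. v $ j = 0" using that by blast
      then have "v = 0\<^sub>v m" using v(1) by (intro eq_vecI) auto
      then show False using v(2) by simp
    qed
    define X where "X = mat k m (\<lambda>(i,j). if i = 0 then v $ j else 0)"
    have Xc: "X \<in> carrier_mat k m" unfolding X_def by simp
    have JBX: "JB * X = 0\<^sub>m k m"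
    proof (rule eq_matI)
      fix i j assume "i < dim_row (0\<^sub>m k m)" "j < dim_col (0\<^sub>m k m)"
      then have ij: "i < k" "j < m" by auto
      have "(JB * X) $$ (i,j) = (\<Sum>l<k. JB $$ (i,l) * X $$ (l,j))" by (rule mult_entry[OF JBc Xc ij])
      also have "\<dots> = JB $$ (i,0) * X $$ (0,j)"
        by (rule sum_single, use k0 in simp, simp add: X_def ij)
      also have "\<dots> = 0" unfolding JB_def a0 using ij k0 by simp
      finally show "(JB * X) $$ (i,j) = 0\<^sub>m k m $$ (i,j)" using ij by simp
    qed (use JBc Xc in auto)
    have XJR: "X * JR = 0\<^sub>m k m"
    proof (rule eq_matI)
      fix i j assume "i < dim_row (0\<^sub>m k m)" "j < dim_col (0\<^sub>m k m)"
      then have ij: "i < k" "j < m" by auto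
      have "(X * JR) $$ (i,j) = (\<Sum>l<m. X $$ (i,l) * JR $$ (l,j))" by (rule mult_entry[OF Xc JRc ij])
      also have "\<dots> = (if i = 0 then (\<Sum>l<m. v $ l * JR $$ (l,j)) else 0)"
        unfolding X_def using ij by (cases "i = 0") simp_all
      also have "(\<Sum>l<m. v $ l * JR $$ (l,j)) = (transpose_mat JR *\<^sub>v v) $ j"
        using ij JRc v(1) by (simp add: scalar_prod_def lessThan_atLeast0 mult.commute)
      also have "\<dots> = 0" using v(3) ij by simp
      finally show "(X * JR) $$ (i,j) = 0\<^sub>m k m $$ (i,j)" using ij by simp
    qed (use Xc JRc in auto)
    define E where "E = four_block_mat (0\<^sub>m k k) X (0\<^sub>m m k) (0\<^sub>m m m)"
    have Ec: "E \<in> carrier_mat (k+m) (k+m)" unfolding E_def using Xc by simp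
    have EJ: "E * J = J * E"
    proof -
      have "E * J = four_block_mat (0\<^sub>m k k * JB + X * 0\<^sub>m m k) (0\<^sub>m k k * 0\<^sub>m k m + X * JR)
          (0\<^sub>m m k * JB + 0\<^sub>m m m * 0\<^sub>m m k) (0\<^sub>m m k * 0\<^sub>m k m + 0\<^sub>m m m * JR)"
        unfolding E_def Jeq by (rule mult_four_block_mat[OF zero_carrier_mat Xc zero_carrier_mat zero_carrier_mat
            JBc zero_carrier_mat zero_carrier_mat JRc])
      also have "\<dots> = four_block_mat (0\<^sub>m k k) (0\<^sub>m k m) (0\<^sub>m m k) (0\<^sub>m m m)"
        using XJR JBc JRc Xc by simp
      finally have 1: "E * J = four_block_mat (0\<^sub>m k k) (0\<^sub>m k m) (0\<^sub>m m k) (0\<^sub>m m m)" .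
      have "J * E = four_block_mat (JB * 0\<^sub>m k k + 0\<^sub>m k m * 0\<^sub>m m k) (JB * X + 0\<^sub>m k m * 0\<^sub>m m m)
          (0\<^sub>m m k * 0\<^sub>m k k + JR * 0\<^sub>m m k) (0\<^sub>m m k * X + JR * 0\<^sub>m m m)"
        unfolding E_def Jeq by (rule mult_four_block_mat[OF JBc zero_carrier_mat zero_carrier_mat JRc
            zero_carrier_mat Xc zero_carrier_mat zero_carrier_mat])
      also have "\<dots> = four_block_mat (0\<^sub>m k k) (0\<^sub>m k m) (0\<^sub>m m k) (0\<^sub>m m m)"
        using JBX JBc JRc Xc by simp
      finally show ?thesis using 1 by simp
    qed
    obtain G where Gind: "indep_fam m m G" and G: "\<forall>l<m. G l \<in> carrier_mat m m \<and> G l * JR = JR * G l"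
      using JM[of R] unfolding m_def JR_def by blast
    have Gc: "\<forall>t<m. G t \<in> carrier_mat m m" using G by simp
    have Gcomm: "\<forall>t<m. G t * JR = JR * G t" using G by simp
    obtain F0 where F0ind: "indep_fam (k + m) (k + m) F0" and F0: "\<forall>l<k+m. F0 l \<in> carrier_mat (k+m) (k+m) \<and>
       F0 l * four_block_mat (jordan_block k a) (0\<^sub>m k m) (0\<^sub>m m k) JR = four_block_mat (jordan_block k a) (0\<^sub>m k m) (0\<^sub>m m k) JR * F0 l
       \<and> (\<forall>i<k. \<forall>j<m. F0 l $$ (i, k+j) = 0)"
      using fam_cons[OF JRc Gc Gcomm Gind, of k a] by (elim exE conjE) (rule that, assumption+)
    have F0c: "\<And>l. l < k+m \<Longrightarrow> F0 l \<in> carrier_mat (k+m) (k+m)" using F0 by simp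
    have F0comm: "\<And>l. l < k+m \<Longrightarrow> F0 l * J = J * F0 l" using F0 unfolding Jeq JB_def by simp
    have F0tr: "\<And>l i j. l < k+m \<Longrightarrow> i < k \<Longrightarrow> j < m \<Longrightarrow> F0 l $$ (i, k+j) = 0" using F0 by simp
    define F where "F l = (if l < k + m then F0 l else E)" for l
    have Fc: "F l \<in> carrier_mat (k+m) (k+m)" if "l < Suc (k+m)" for l
      unfolding F_def using F0c Ec that by simp
    have Fcomm: "F l * J = J * F l" if "l < Suc (k+m)" for l
      unfolding F_def using F0comm EJ that by simp
    have Find: "indep_fam (k+m) (Suc (k+m)) F"
      unfolding indep_fam_def
    proof (intro allI impI)
      fix c :: "nat \<Rightarrow> complex" and l
      assume h: "\<forall>i<k+m. \<forall>j<k+m. (\<Sum>l<Suc (k+m). c l * F l $$ (i,j)) = 0" and l: "l < Suc (k+m)"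
      have split: "(\<Sum>l<Suc (k+m). c l * F l $$ (i,j)) = (\<Sum>l<k+m. c l * F0 l $$ (i,j)) + c (k+m) * E $$ (i,j)" for i j
      proof -
        have "(\<Sum>l<Suc (k+m). c l * F l $$ (i,j)) = (\<Sum>l<k+m. c l * F l $$ (i,j)) + c (k+m) * F (k+m) $$ (i,j)"
          by simp
        also have "(\<Sum>l<k+m. c l * F l $$ (i,j)) = (\<Sum>l<k+m. c l * F0 l $$ (i,j))"
          unfolding F_def by (rule sum.cong) auto
        finally show ?thesis unfolding F_def by simp
      qed
      have cE: "c (k+m) = 0"
      proof -
        have "0 = (\<Sum>l<k+m. c l * F0 l $$ (0,k+j0)) + c (k+m) * E $$ (0,k+j0)"
          using h j0 k0 split[of 0 "k+j0"] by simp
        also have "(\<Sum>l<k+m. c l * F0 l $$ (0,k+j0)) = 0"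
          by (rule sum.neutral) (use F0tr k0 j0 in simp)
        also have "E $$ (0,k+j0) = v $ j0"
          unfolding E_def using four_entry_tr[OF zero_carrier_mat zero_carrier_mat, of 0 k j0 m X "0\<^sub>m m k"] k0 j0
          by (simp add: X_def)
        finally show ?thesis using j0 by simp
      qed
      have "\<forall>i<k+m. \<forall>j<k+m. (\<Sum>l<k+m. c l * F0 l $$ (i,j)) = 0"
      proof (intro allI impI)
        fix i j assume "i < k+m" "j < k+m"
        then show "(\<Sum>l<k+m. c l * F0 l $$ (i,j)) = 0" using h split[of i j] cE by simp
      qed
      then have c0: "\<forall>l<k+m. c l = 0" using F0ind unfolding indep_fam_def by blast
      show "c l = 0"
      proof (cases "l < k + m")
        case True then show ?thesis using c0 by simp
      next
        case False then have "l = k + m" using l by simp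
        then show ?thesis using cE by simp
      qed
    qed
    have PQi': "inv_pair (k+m) P Q" using PQi km by simp
    have Jc': "J \<in> carrier_mat (k+m) (k+m)" using Jc km by simp
    have T1: "indep_fam (k+m) (Suc (k+m)) (\<lambda>l. P * F l * Q)"
      by (rule fam_transfer(1)[OF PQi' Jc' Fc Fcomm Find])
    have T2: "\<And>l. l < Suc (k+m) \<Longrightarrow> P * F l * Q \<in> centralizer (k+m) (P * J * Q)"
      by (rule fam_transfer(2)[OF PQi' Jc' Fc Fcomm Find])
    obtain S where S: "finite S" "S \<subseteq> centralizer (k+m) y" "mat_lin_indep (k+m) S" "card S = Suc (k+m)"
      using fam_to_set[OF T1, of y] T2 PQ(4) by blast
    have "Suc (k+m) \<le> subspace_dim (k+m) (centralizer (k+m) y)" by (rule subspace_dim_ge[OF S])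
    moreover have "subspace_dim (k+m) (centralizer (k+m) y) = k + m"
      using reg km unfolding regular_mat_def by simp
    ultimately show False by simp
  qed
qed


theorem theorem3p7:
  fixes n :: nat and g h :: "complex mat"
  assumes "n \<ge> 1"
    and "inv_pair (n+1) g h"
    and "\<not> flag_closed (n+1) (K_orbit n (conj_set g h (upper_tri (n+1))))"
  shows "\<forall>y \<in> conj_set g h (strict_upper_tri (n+1)).
           regular_mat (n+1) y \<longrightarrow> \<not> nilpotent_mat (n+1) (proj_k n y)"
proof (intro ballI impI notI)
  fix y
  assume ymem: "y \<in> conj_set g h (strict_upper_tri (n+1))" and reg: "regular_mat (n+1) y"
    and nil: "nilpotent_mat (n+1) (proj_k n y)"
  have gh: "inv_pair (Suc n) g h" using assms(2) by simp
  have g: "g \<in> carrier_mat (Suc n) (Suc n)" and h: "h \<in> carrier_mat (Suc n) (Suc n)"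
    using gh unfolding inv_pair_def by auto
  from ymem obtain u where u: "u \<in> strict_upper_tri (Suc n)" and yu: "y = g * u * h"
    unfolding conj_set_def by auto
  have uc: "u \<in> carrier_mat (Suc n) (Suc n)" using su_carrier[OF u] .
  have yc: "y \<in> carrier_mat (Suc n) (Suc n)" unfolding yu using g h uc by simp
  have yN: "y ^\<^sub>m Suc n = 0\<^sub>m (Suc n) (Suc n)"
    unfolding yu pow_conj[OF gh uc] su_nilpotent[OF u] using g h by simp
  have yn: "y ^\<^sub>m n \<noteq> 0\<^sub>m (Suc n) (Suc n)"
  proof
    assume "y ^\<^sub>m n = 0\<^sub>m (Suc n) (Suc n)"
    from nonreg[OF yc yN this] reg show False by simp
  qed
  have nil': "nilpotent_mat (Suc n) (proj_k n (g * u * h))" using nil yu by simp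
  obtain p where p: "typeP n p g h" using partC[OF gh u yn[unfolded yu] nil'] by blast
  have "flag_closed (Suc n) (K_orbit n (conj_set g h (upper_tri (Suc n))))"
    by (rule typeP_flag_closed[OF gh p])
  then show False using assms(3) by simp
qed

end
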